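(* Assume (A1), (A2), (A3), (A4). Then the multi-cluster game in which each cluster $h$ solves $\min_{\mathbf x^h\in\mathbb R^{q_h}}F^h(\mathbf x^h,\mathbf x^{-h})$, $F^h=\sum_{i=1}^{n_h}f_i^h$, has a unique Nash equilibrium $\mathbf x^*\in\mathbb R^q$, i.e. a unique point with $F^h((\mathbf x^h)^*,(\mathbf x^{-h})^* )\le F^h(\mathbf x^h,(\mathbf x^{-h})^* )$ for all $\mathbf x^h\in\mathbb R^{q_h}$ and all $h$; it satisfies $\sum_{i=1}^{n_h}\nabla_{\mathbf x^h}f_i^h(\mathbf x^* )=\mathbf 0$ for all $h$. Moreover, there exists a step-size $\alpha>0$ such that for every initial $\mathbf x(0)$ the iterates of the algorithm with initialization $\mathbf y^h(0)=\mathbf G^h(0)$ satisfy $\lim_{k\to\infty}\mathbf x_i(k)=\mathbf x^*$ for all agents $i=1,\dots,n$ (so all agents reach consensus on $\mathbf x^*$), and the convergence is linear (geometric): there exist $C>0$ and $\rho\in(0,1)$ with $\|\mathbf x_i(k)-\mathbf x^*\|_2\le C\rho^k$ for all $i$ and $k$.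
   Context: Setting: $n$ agents partitioned into $H$ disjoint clusters, cluster $h$ containing $n_h$ agents, ordered so that cluster 1 comes first, then cluster 2, etc. Decision vector $\mathbf x=(\mathbf x^1,\dots,\mathbf x^H)\in\mathbb R^q$, $\mathbf x^h\in\mathbb R^{q_h}$, $q=\sum_hq_h$; $\mathbf x^{-h}$ denotes the components other than $\mathbf x^h$. The $i$-th agent of cluster $h$ has cost $f_i^h:\mathbb R^q\to\mathbb R$. (A1): for each $h$, $\mathbf C^h\in\mathbb R^{n_h\times n_h}$ is nonnegative, column-stochastic ($\mathbf 1^T\mathbf C^h=\mathbf 1^T$), with positive diagonal, and its directed graph (edge $j\to i$ iff $\mathbf C^h_{ij}>0$) is strongly connected. (A2): $\mathbf R\in\mathbb R^{n\times n}$ is nonnegative, row-stochastic ($\mathbf R\mathbf 1=\mathbf 1$), with positive diagonal and strongly connected directed graph. (A3): each $f_i^h$ is convex and continuously differentiable, and there is $L>0$ with $\|\nabla_{\mathbf x^h}f_i^h(\mathbf x)-\nabla_{\mathbf x^h}f_i^h(\tilde{\mathbf x})\|_2\le L\|\mathbf x-\tilde{\mathbf x}\|_2$ for all $\mathbf x,\tilde{\mathbf x}$ and all $i,h$. (A4): the game mapping $\mathbf M(\mathbf x)=(\mathbf g^1(\mathbf x),\dots,\mathbf g^H(\mathbf x))$, $\mathbf g^h(\mathbf x)=\sum_{i=1}^{n_h}\nabla_{\mathbf x^h}f_i^h(\mathbf x)$, is strongly monotone on $\mathbb R^q$ with constant $\mu>0$: $(\mathbf M(\mathbf x)-\mathbf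 M(\mathbf y))^T(\mathbf x-\mathbf y)\ge\mu\|\mathbf x-\mathbf y\|_2^2$. Algorithm (constant step-size $\alpha>0$): $\mathbf x(k)\in\mathbb R^{n\times q}$ has $i$-th row $\mathbf x_i(k)^T$ (agent $i$'s estimate of the whole decision vector); $\mathbf y^h(k)\in\mathbb R^{n_h\times q_h}$ (tracking variables of cluster $h$); $\mathbf Y(k)=\operatorname{diag}\{\mathbf y^1(k),\dots,\mathbf y^H(k)\}\in\mathbb R^{n\times q}$ (block diagonal); $\mathbf G^h(k)\in\mathbb R^{n_h\times q_h}$ has $i$-th row $\nabla_{\mathbf x^h}f_i^h(\mathbf x_i(k))^T$ ($\mathbf x_i(k)$ the estimate of the $i$-th agent of cluster $h$). Updates $\mathbf x(k+1)=\mathbf R(\mathbf x(k)-\alpha\mathbf Y(k))$, $\mathbf y^h(k+1)=\mathbf C^h\mathbf y^h(k)+\mathbf G^h(k+1)-\mathbf G^h(k)$, $k\ge0$. *)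

theory Defs
  imports "HOL-Analysis.Analysis"
begin

text \<open>Agents form a finite type 'a, clusters a finite type 'h, and the
coordinates of the decision vector x in R^q a finite type 'q.
cl a is the cluster of agent a, blk j is the cluster owning coordinate j
(so x^h = coordinates j with blk j = h). Vectors in R^(q_h) are represented as
vectors in R^q that vanish outside the block h.\<close>

text \<open>Partial gradient (nabla_{x^h} f) of agent a, h = cl a, embedded in R^q
(zero outside block h); grad a x is the full gradient of f a at x.\<close>
definition pgrad :: "('q \<Rightarrow> 'h) \<Rightarrow> ('a \<Rightarrow> 'h) \<Rightarrow> ('a \<Rightarrow> real^'q \<Rightarrow> real^'q)
                     \<Rightarrow> 'a \<Rightarrow> real^'q \<Rightarrow> real^'q" where
  "pgrad blk cl grad a x = (\<chi> j. if blk j = cl a then grad a x $ j else 0)"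

definition game_map :: "('q \<Rightarrow> 'h) \<Rightarrow> ('a::finite \<Rightarrow> 'h) \<Rightarrow> ('a \<Rightarrow> real^'q \<Rightarrow> real^'q)
                        \<Rightarrow> real^'q \<Rightarrow> real^'q" where
  "game_map blk cl grad x = (\<chi> j. \<Sum>a\<in>{a. cl a = blk j}. grad a x $ j)"

definition cluster_cost :: "('a::finite \<Rightarrow> 'h) \<Rightarrow> ('a \<Rightarrow> real^'q \<Rightarrow> real) \<Rightarrow> 'h \<Rightarrow> real^'q \<Rightarrow> real" where
  "cluster_cost cl f h x = (\<Sum>a\<in>{a. cl a = h}. f a x)"

definition upd_block :: "('q \<Rightarrow> 'h) \<Rightarrow> 'h \<Rightarrow> real^'q \<Rightarrow> real^'q \<Rightarrow> real^'q" where
  "upd_block blk h x z = (\<chi> j. if blk j = h then z $ j else x $ j)"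

definition is_NE :: "('q \<Rightarrow> 'h) \<Rightarrow> ('a::finite \<Rightarrow> 'h) \<Rightarrow> ('a \<Rightarrow> real^'q \<Rightarrow> real) \<Rightarrow> real^'q \<Rightarrow> bool" where
  "is_NE blk cl f xs \<longleftrightarrow>
     (\<forall>h z. cluster_cost cl f h xs \<le> cluster_cost cl f h (upd_block blk h xs z))"

definition strongly_connected_on :: "'n set \<Rightarrow> real^'n^'n \<Rightarrow> bool" where
  "strongly_connected_on S A \<longleftrightarrow>
     (\<forall>u\<in>S. \<forall>v\<in>S. (u, v) \<in> {(j, i). A $ i $ j > 0}\<^sup>*)"

definition A1 :: "('a::finite \<Rightarrow> 'h) \<Rightarrow> real^'a^'a \<Rightarrow> bool" where
  "A1 cl C \<longleftrightarrow>
     (\<forall>i j. cl i \<noteq> cl j \<longrightarrow> C $ i $ j = 0) \<and>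
     (\<forall>i j. C $ i $ j \<ge> 0) \<and>
     (\<forall>j. (\<Sum>i\<in>{i. cl i = cl j}. C $ i $ j) = 1) \<and>
     (\<forall>i. C $ i $ i > 0) \<and>
     (\<forall>h. strongly_connected_on {a. cl a = h} C)"

definition A2 :: "real^'a::finite^'a \<Rightarrow> bool" where
  "A2 R \<longleftrightarrow>
     (\<forall>i j. R $ i $ j \<ge> 0) \<and> (\<forall>i. (\<Sum>j\<in>UNIV. R $ i $ j) = 1) \<and>
     (\<forall>i. R $ i $ i > 0) \<and> strongly_connected_on UNIV R"

text \<open>Iterates (x(k), y(k)): x(k) a is the estimate of agent a (row a of x(k));
y(k) a is row a of Y(k) = diag{y^1(k),...,y^H(k)}, i.e. the tracking vector of a
embedded in R^q with zeros outside block cl a.\<close>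
fun iter :: "('q \<Rightarrow> 'h) \<Rightarrow> ('a::finite \<Rightarrow> 'h) \<Rightarrow> ('a \<Rightarrow> real^'q \<Rightarrow> real^'q)
             \<Rightarrow> real^'a^'a \<Rightarrow> real^'a^'a \<Rightarrow> real \<Rightarrow> ('a \<Rightarrow> real^'q) \<Rightarrow> nat
             \<Rightarrow> ('a \<Rightarrow> real^'q) \<times> ('a \<Rightarrow> real^'q)" where
  "iter blk cl grad R C \<alpha> x0 0 = (x0, \<lambda>a. pgrad blk cl grad a (x0 a))"
| "iter blk cl grad R C \<alpha> x0 (Suc k) =
     (let x = fst (iter blk cl grad R C \<alpha> x0 k);
          y = snd (iter blk cl grad R C \<alpha> x0 k);
          x' = (\<lambda>a. \<Sum>b\<in>UNIV. R $ a $ b *\<^sub>R (x b - \<alpha> *\<^sub>R y b))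
      in (x', \<lambda>a. (\<Sum>b\<in>UNIV. C $ a $ b *\<^sub>R y b)
                   + pgrad blk cl grad a (x' a) - pgrad blk cl grad a (x a)))"

end

theory Submission
  imports Defs
begin

fun mpow :: "('a::finite \<Rightarrow> 'a \<Rightarrow> real) \<Rightarrow> nat \<Rightarrow> 'a \<Rightarrow> 'a \<Rightarrow> real" where
  "mpow P 0 i j = (if i = j then 1 else 0)"
| "mpow P (Suc k) i j = (\<Sum>l\<in>UNIV. P i l * mpow P k l j)"

lemma sum_ind_r: fixes f :: "'a::finite \<Rightarrow> real" shows "(\<Sum>l\<in>UNIV. f l * (if l = j then 1 else 0)) = (f j :: real)"
proof -
  have e: "(\<lambda>l. f l * (if l = j then 1 else 0)) = (\<lambda>l. if l = j then f j else 0)" by auto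
  show ?thesis by (simp only: e) simp
qed

lemma sum_ind_l: fixes f :: "'a::finite \<Rightarrow> real" shows "(\<Sum>l\<in>UNIV. (if i = l then 1 else 0) * f l) = (f i :: real)"
proof -
  have e: "(\<lambda>l. (if i = l then 1 else 0) * f l) = (\<lambda>l. if i = l then f i else 0)" by auto
  show ?thesis by (simp only: e) simp
qed

lemma mpow_add: "mpow P (m + k) i j = (\<Sum>l\<in>UNIV. mpow P m i l * mpow P k l j)"
proof (induction m arbitrary: i)
  case 0 then show ?case by (simp add: sum_ind_l)
next
  case (Suc m)
  have "mpow P (Suc m + k) i j = (\<Sum>r\<in>UNIV. P i r * mpow P (m+k) r j)" by simp
  also have "\<dots> = (\<Sum>r\<in>UNIV. P i r * (\<Sum>l\<in>UNIV. mpow P m r l * mpow P k l j))" using Suc by simp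
  also have "\<dots> = (\<Sum>r\<in>UNIV. \<Sum>l\<in>UNIV. P i r * mpow P m r l * mpow P k l j)"
    by (simp add: sum_distrib_left mult.assoc)
  also have "\<dots> = (\<Sum>l\<in>UNIV. \<Sum>r\<in>UNIV. P i r * mpow P m r l * mpow P k l j)"
    by (rule sum.swap)
  also have "\<dots> = (\<Sum>l\<in>UNIV. (\<Sum>r\<in>UNIV. P i r * mpow P m r l) * mpow P k l j)"
    by (simp add: sum_distrib_right)
  finally show ?case by simp
qed

lemma mpow_one: "mpow P 1 i j = P i j"
  by (simp add: sum_ind_r)

lemma mpow_Suc_right: "mpow P (Suc k) i j = (\<Sum>l\<in>UNIV. mpow P k i l * P l j)"
  using mpow_add[of P k 1 i j] by (simp only: mpow_one Suc_eq_plus1)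

definition blockstoch :: "('a \<Rightarrow> 'h) \<Rightarrow> ('a::finite \<Rightarrow> 'a \<Rightarrow> real) \<Rightarrow> bool" where
 "blockstoch cl P \<longleftrightarrow> (\<forall>i j. cl i \<noteq> cl j \<longrightarrow> P i j = 0) \<and> (\<forall>i j. 0 \<le> P i j)
    \<and> (\<forall>i. (\<Sum>j\<in>UNIV. P i j) = 1) \<and> (\<forall>i. 0 < P i i)
    \<and> (\<forall>i j. cl i = cl j \<longrightarrow> (j, i) \<in> {(j,i). 0 < P i j}\<^sup>*)"

lemma zero_geom:
  fixes x c \<sigma> :: real
  assumes "0 \<le> \<sigma>" "\<sigma> < 1" "\<And>k. \<bar>x\<bar> \<le> c * \<sigma>^k"
  shows "x = 0"
proof -
  have "(\<lambda>k. c * \<sigma>^k) \<longlonglongrightarrow> c * 0"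
    by (intro tendsto_mult tendsto_const LIMSEQ_power_zero) (use assms in auto)
  then have "\<bar>x\<bar> \<le> c * 0"
    by (rule LIMSEQ_le_const) (use assms in auto)
  then show ?thesis by simp
qed

lemma geom_div:
  fixes \<gamma> :: real
  assumes "0 \<le> \<gamma>" "\<gamma> < 1" "m \<ge> 1"
  shows "\<exists>c \<sigma>. 0 \<le> c \<and> 0 \<le> \<sigma> \<and> \<sigma> < 1 \<and> (\<forall>k. \<gamma>^(k div m) \<le> c * \<sigma>^k)"
proof -
  define g where "g = max \<gamma> (1/2)"
  have g: "0 < g" "g < 1" "\<gamma> \<le> g" using assms by (auto simp: g_def)
  define \<sigma> where "\<sigma> = root m g"
  have s: "0 < \<sigma>" "\<sigma> < 1" using g assms by (auto simp: \<sigma>_def real_root_lt_1_iff)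
  have sm: "\<sigma>^m = g" using g assms by (simp add: \<sigma>_def real_root_pow_pos2)
  have "\<forall>k. \<gamma>^(k div m) \<le> (1/g) * \<sigma>^k"
  proof
    fix k
    have "\<gamma>^(k div m) \<le> g^(k div m)" using g assms by (simp add: power_mono)
    also have "\<dots> = \<sigma>^(m * (k div m))" by (simp add: power_mult sm)
    also have "\<dots> \<le> (1/g) * \<sigma>^k"
    proof -
      have k: "k = m * (k div m) + k mod m" by simp
      have "\<sigma>^k = \<sigma>^(m * (k div m)) * \<sigma>^(k mod m)" by (simp add: power_add[symmetric])
      moreover have "\<sigma>^(k mod m) \<ge> \<sigma>^m"
        using s assms by (intro power_decreasing) (auto intro: less_imp_le)
      ultimately have "\<sigma>^k \<ge> \<sigma>^(m * (k div m)) * g"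
        using s sm by (metis mult_left_mono zero_le_power less_imp_le)
      then show ?thesis using g by (simp add: field_simps)
    qed
    finally show "\<gamma>^(k div m) \<le> (1/g) * \<sigma>^k" .
  qed
  then show ?thesis using g s by (intro exI[of _ "1/g"] exI[of _ \<sigma>]) auto
qed

context
  fixes cl :: "'a::finite \<Rightarrow> 'h" and P :: "'a \<Rightarrow> 'a \<Rightarrow> real"
  assumes bs: "blockstoch cl P"
begin

lemma P_cross: "cl i \<noteq> cl j \<Longrightarrow> P i j = 0" using bs by (auto simp: blockstoch_def)
lemma P_nonneg: "0 \<le> P i j" using bs by (auto simp: blockstoch_def)
lemma P_rowsum: "(\<Sum>j\<in>UNIV. P i j) = 1" using bs by (auto simp: blockstoch_def)
lemma P_diag: "0 < P i i" using bs by (auto simp: blockstoch_def)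
lemma P_conn: "cl i = cl j \<Longrightarrow> (j, i) \<in> {(j,i). 0 < P i j}\<^sup>*" using bs by (auto simp: blockstoch_def)

lemma mpow_nonneg: "0 \<le> mpow P k i j"
  by (induction k arbitrary: i) (auto intro!: sum_nonneg mult_nonneg_nonneg P_nonneg)

lemma mpow_rowsum: "(\<Sum>j\<in>UNIV. mpow P k i j) = 1"
proof (induction k arbitrary: i)
  case 0 then show ?case by simp
next
  case (Suc k)
  have "(\<Sum>j\<in>UNIV. mpow P (Suc k) i j) = (\<Sum>j\<in>UNIV. \<Sum>l\<in>UNIV. P i l * mpow P k l j)"
    by simp
  also have "\<dots> = (\<Sum>l\<in>UNIV. \<Sum>j\<in>UNIV. P i l * mpow P k l j)" by (rule sum.swap)
  also have "\<dots> = (\<Sum>l\<in>UNIV. P i l * (\<Sum>j\<in>UNIV. mpow P k l j))"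
    by (simp add: sum_distrib_left)
  finally have "(\<Sum>j\<in>UNIV. mpow P (Suc k) i j) = (\<Sum>l\<in>UNIV. P i l * (\<Sum>j\<in>UNIV. mpow P k l j))" .
  then show ?case using Suc P_rowsum by simp
qed

lemma mpow_cross: "cl i \<noteq> cl j \<Longrightarrow> mpow P k i j = 0"
proof (induction k arbitrary: i)
  case 0 then show ?case by auto
next
  case (Suc k)
  have "\<And>l. P i l * mpow P k l j = 0"
    by (metis P_cross Suc.IH Suc.prems mult_eq_0_iff)
  then show ?case by (simp add: sum.neutral)
qed

lemma mpow_le1: "mpow P k i j \<le> 1"
proof -
  have "mpow P k i j \<le> (\<Sum>j\<in>UNIV. mpow P k i j)"
    by (rule member_le_sum) (auto simp: mpow_nonneg)
  then show ?thesis by (simp add: mpow_rowsum)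
qed

lemma P_le1: "P i j \<le> 1"
  using mpow_le1[of 1 i j] unfolding mpow_one .

lemma mpow_diag_step: "P i i * mpow P k i j \<le> mpow P (Suc k) i j"
proof -
  have "P i i * mpow P k i j \<le> (\<Sum>l\<in>UNIV. P i l * mpow P k l j)"
    by (rule member_le_sum[of i UNIV "\<lambda>l. P i l * mpow P k l j", simplified])
       (auto intro: mult_nonneg_nonneg P_nonneg mpow_nonneg)
  then show ?thesis by simp
qed

definition "\<delta> = Min ((\<lambda>(i,j). P i j) ` {(i,j). 0 < P i j})"

lemma delta_pos: "0 < \<delta>" and delta_le: "0 < P i j \<Longrightarrow> \<delta> \<le> P i j"
proof -
  have fin: "finite ((\<lambda>(i,j). P i j) ` {(i,j). 0 < P i j})" by simp
  have ne: "(\<lambda>(i,j). P i j) ` {(i,j). 0 < P i j} \<noteq> {}"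
    using P_diag[of undefined] by auto
  show "0 < \<delta>" unfolding \<delta>_def using fin ne by (subst Min_gr_iff) auto
  show "0 < P i j \<Longrightarrow> \<delta> \<le> P i j" unfolding \<delta>_def using fin by (intro Min_le) auto
qed

lemma delta_le1: "\<delta> \<le> 1"
  using delta_le[OF P_diag[of undefined]] P_le1[of undefined undefined] by linarith

lemma path_pow: "(j, i) \<in> {(j,i). 0 < P i j} ^^ l \<Longrightarrow> \<delta>^l \<le> mpow P l i j"
proof (induction l arbitrary: i)
  case 0 then show ?case by simp
next
  case (Suc l)
  from Suc.prems obtain r where r: "(j, r) \<in> {(j,i). 0 < P i j} ^^ l" "0 < P i r"
    by auto
  have "\<delta>^Suc l = \<delta> * \<delta>^l" by simp
  also have "\<dots> \<le> P i r * mpow P l r j"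
    using Suc.IH[OF r(1)] delta_le[OF r(2)] delta_pos
    by (intro mult_mono) (auto intro: less_imp_le)
  also have "\<dots> \<le> (\<Sum>l'\<in>UNIV. P i l' * mpow P l l' j)"
    by (rule member_le_sum[of r UNIV "\<lambda>l'. P i l' * mpow P l l' j", simplified])
       (auto intro: mult_nonneg_nonneg P_nonneg mpow_nonneg)
  finally show ?case by simp
qed

lemma pad_pow: "l \<le> m \<Longrightarrow> \<delta>^l \<le> mpow P l i j \<Longrightarrow> \<delta>^m \<le> mpow P m i j"
proof (induction m)
  case 0 then show ?case by simp
next
  case (Suc m)
  show ?case
  proof (cases "l = Suc m")
    case True then show ?thesis using Suc by simp
  next
    case False
    then have "\<delta>^m \<le> mpow P m i j" using Suc by simp
    then have "\<delta> * \<delta>^m \<le> P i i * mpow P m i j"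
      using delta_le[OF P_diag[of i]] delta_pos by (intro mult_mono) auto
    then show ?thesis using mpow_diag_step[of i m j] by simp
  qed
qed

lemma exists_m: "\<exists>m\<ge>1. \<forall>i j. cl i = cl j \<longrightarrow> \<delta>^m \<le> mpow P m i j"
proof -
  define E where "E = {(j,i). 0 < P i j}"
  have "\<forall>ij. \<exists>l. cl (fst ij) = cl (snd ij) \<longrightarrow> (snd ij, fst ij) \<in> E ^^ l"
    using P_conn by (auto simp: E_def rtrancl_power)
  then obtain lf where lf: "\<And>ij. cl (fst ij) = cl (snd ij) \<Longrightarrow> (snd ij, fst ij) \<in> E ^^ lf ij"
    by metis
  define m where "m = Max (insert 1 (range lf))"
  have "m \<ge> 1" unfolding m_def by simp
  moreover have "\<forall>i j. cl i = cl j \<longrightarrow> \<delta>^m \<le> mpow P m i j"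
  proof (intro allI impI)
    fix i j assume "cl i = cl j"
    then have p: "(j, i) \<in> E ^^ lf (i,j)" using lf[of "(i,j)"] by simp
    have "lf (i,j) \<le> m" unfolding m_def by (intro Max_ge) auto
    then show "\<delta>^m \<le> mpow P m i j"
      using pad_pow path_pow p unfolding E_def by blast
  qed
  ultimately show ?thesis by blast
qed


definition "hi j k = Max ((\<lambda>i. mpow P k i j) ` {i. cl i = cl j})"
definition "lo j k = Min ((\<lambda>i. mpow P k i j) ` {i. cl i = cl j})"

lemma fin_ne: "finite ((\<lambda>i. mpow P k i j) ` {i. cl i = cl j})"
  "(\<lambda>i. mpow P k i j) ` {i. cl i = cl j} \<noteq> {}"
  by auto

lemma hi_ge: "cl i = cl j \<Longrightarrow> mpow P k i j \<le> hi j k"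
  unfolding hi_def by (rule Max_ge) auto
lemma lo_le: "cl i = cl j \<Longrightarrow> lo j k \<le> mpow P k i j"
  unfolding lo_def by (rule Min_le) auto
lemma hi_att: "\<exists>i. cl i = cl j \<and> mpow P k i j = hi j k"
  using Max_in[OF fin_ne[of k j]] unfolding hi_def by auto
lemma lo_att: "\<exists>i. cl i = cl j \<and> mpow P k i j = lo j k"
  using Min_in[OF fin_ne[of k j]] unfolding lo_def by auto
lemma lo_le_hi: "lo j k \<le> hi j k"
  using lo_le[of j j k] hi_ge[of j j k] by simp
lemma lo_nonneg: "0 \<le> lo j k"
  using lo_att[of j k] mpow_nonneg by metis
lemma hi_le1: "hi j k \<le> 1"
  using hi_att[of j k] mpow_le1 by metis

lemma restrict_sum:
  assumes "cl i = cl j"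
  shows "(\<Sum>l\<in>UNIV. mpow P m i l * g l) = (\<Sum>l\<in>{l. cl l = cl j}. mpow P m i l * g l)"
  by (rule sum.mono_neutral_right) (use assms mpow_cross in auto)

lemma restrict_sumP:
  assumes "cl i = cl j"
  shows "(\<Sum>l\<in>UNIV. P i l * g l) = (\<Sum>l\<in>{l. cl l = cl j}. P i l * g l)"
  by (rule sum.mono_neutral_right) (use assms P_cross in auto)

lemma rowsum_S: "cl i = cl j \<Longrightarrow> (\<Sum>l\<in>{l. cl l = cl j}. mpow P m i l) = 1"
  using restrict_sum[of i j m "\<lambda>_. 1"] mpow_rowsum[of m i] by simp

lemma rowsumP_S: "cl i = cl j \<Longrightarrow> (\<Sum>l\<in>{l. cl l = cl j}. P i l) = 1"
  using restrict_sumP[of i j "\<lambda>_. 1"] P_rowsum[of i] by simp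

lemma step_bounds:
  assumes "cl i = cl j"
  shows "mpow P (Suc k) i j \<le> hi j k" "lo j k \<le> mpow P (Suc k) i j"
proof -
  have e: "mpow P (Suc k) i j = (\<Sum>l\<in>{l. cl l = cl j}. P i l * mpow P k l j)"
    using restrict_sumP[OF assms, of "\<lambda>l. mpow P k l j"] by simp
  have "(\<Sum>l\<in>{l. cl l = cl j}. P i l * mpow P k l j) \<le> (\<Sum>l\<in>{l. cl l = cl j}. P i l * hi j k)"
    by (rule sum_mono) (auto intro: mult_left_mono hi_ge P_nonneg)
  also have "\<dots> = hi j k" using rowsumP_S[OF assms] by (simp add: sum_distrib_right[symmetric])
  finally show "mpow P (Suc k) i j \<le> hi j k" using e by simp
  have "(\<Sum>l\<in>{l. cl l = cl j}. P i l * lo j k) \<le> (\<Sum>l\<in>{l. cl l = cl j}. P i l * mpow P k l j)"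
    by (rule sum_mono) (auto intro: mult_left_mono lo_le P_nonneg)
  moreover have "(\<Sum>l\<in>{l. cl l = cl j}. P i l * lo j k) = lo j k"
    using rowsumP_S[OF assms] by (simp add: sum_distrib_right[symmetric])
  ultimately show "lo j k \<le> mpow P (Suc k) i j" using e by simp
qed

lemma hi_Suc: "hi j (Suc k) \<le> hi j k"
  using hi_att[of j "Suc k"] step_bounds by metis
lemma lo_Suc: "lo j k \<le> lo j (Suc k)"
  using lo_att[of j "Suc k"] step_bounds by metis

lemma hi_mono: "k \<le> k' \<Longrightarrow> hi j k' \<le> hi j k"
  by (induction k' rule: dec_induct) (auto intro: order_trans[OF hi_Suc])
lemma lo_mono: "k \<le> k' \<Longrightarrow> lo j k \<le> lo j k'"
  by (induction k' rule: dec_induct) (auto intro: order_trans[OF _ lo_Suc])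

context
  fixes m :: nat
  assumes mprop: "\<forall>i j. cl i = cl j \<longrightarrow> \<delta>^m \<le> mpow P m i j"
begin

lemma contr_pair:
  assumes i: "cl i = cl j" and i': "cl i' = cl j"
  shows "mpow P (m+k) i j - mpow P (m+k) i' j \<le> (1 - \<delta>^m) * (hi j k - lo j k)"
proof -
  define S where "S = {l. cl l = cl j}"
  define H where "H = hi j k"
  define Lo where "Lo = lo j k"
  define \<epsilon> where "\<epsilon> = \<delta>^m"
  have eps: "0 \<le> \<epsilon>" "\<epsilon> \<le> 1" using delta_pos delta_le1 by (auto simp: \<epsilon>_def power_le_one)
  have fS: "finite S" by simp
  have cS: "1 \<le> card S"
  proof -
    have "j \<in> S" by (simp add: S_def)
    then have "S \<noteq> {}" by auto
    then show ?thesis using fS by (simp add: Suc_leI card_gt_0_iff)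
  qed
  have zH: "\<And>l. l \<in> S \<Longrightarrow> mpow P k l j \<le> H" by (auto simp: S_def H_def intro: hi_ge)
  have zL: "\<And>l. l \<in> S \<Longrightarrow> Lo \<le> mpow P k l j" by (auto simp: S_def Lo_def intro: lo_le)
  have e1: "mpow P (m+k) i j = (\<Sum>l\<in>S. mpow P m i l * mpow P k l j)"
    using mpow_add[of P m k i j] restrict_sum[OF i, of m "\<lambda>l. mpow P k l j"] by (simp add: S_def)
  have e2: "mpow P (m+k) i' j = (\<Sum>l\<in>S. mpow P m i' l * mpow P k l j)"
    using mpow_add[of P m k i' j] restrict_sum[OF i', of m "\<lambda>l. mpow P k l j"] by (simp add: S_def)
  have r1: "(\<Sum>l\<in>S. mpow P m i l) = 1" using rowsum_S[OF i] by (simp add: S_def)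
  have r2: "(\<Sum>l\<in>S. mpow P m i' l) = 1" using rowsum_S[OF i'] by (simp add: S_def)
  have q1: "\<And>l. l \<in> S \<Longrightarrow> \<epsilon> \<le> mpow P m i l" using mprop i by (auto simp: S_def \<epsilon>_def)
  have q2: "\<And>l. l \<in> S \<Longrightarrow> \<epsilon> \<le> mpow P m i' l" using mprop i' by (auto simp: S_def \<epsilon>_def)
  have up: "(\<Sum>l\<in>S. mpow P m i l * mpow P k l j) = H - (\<Sum>l\<in>S. mpow P m i l * (H - mpow P k l j))"
    using r1 by (simp add: right_diff_distrib sum_subtractf sum_distrib_right[symmetric])
  have up2: "(\<Sum>l\<in>S. \<epsilon> * (H - mpow P k l j)) \<le> (\<Sum>l\<in>S. mpow P m i l * (H - mpow P k l j))"
    by (rule sum_mono) (use q1 zH in \<open>auto intro: mult_right_mono\<close>)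
  have lw: "(\<Sum>l\<in>S. mpow P m i' l * mpow P k l j) = Lo + (\<Sum>l\<in>S. mpow P m i' l * (mpow P k l j - Lo))"
    using r2 by (simp add: right_diff_distrib sum_subtractf sum_distrib_right[symmetric])
  have lw2: "(\<Sum>l\<in>S. \<epsilon> * (mpow P k l j - Lo)) \<le> (\<Sum>l\<in>S. mpow P m i' l * (mpow P k l j - Lo))"
    by (rule sum_mono) (use q2 zL in \<open>auto intro: mult_right_mono\<close>)
  have tot: "(\<Sum>l\<in>S. \<epsilon> * (H - mpow P k l j)) + (\<Sum>l\<in>S. \<epsilon> * (mpow P k l j - Lo)) = \<epsilon> * card S * (H - Lo)"
    by (simp add: sum.distrib[symmetric] algebra_simps)
  have "mpow P (m+k) i j - mpow P (m+k) i' j \<le> (H - Lo) - \<epsilon> * card S * (H - Lo)"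
    using e1 e2 up up2 lw lw2 tot by linarith
  also have "\<dots> \<le> (1 - \<epsilon>) * (H - Lo)"
  proof -
    have "0 \<le> H - Lo" using lo_le_hi by (simp add: H_def Lo_def)
    then have "\<epsilon> * 1 * (H - Lo) \<le> \<epsilon> * card S * (H - Lo)"
      using cS eps by (intro mult_right_mono mult_left_mono) auto
    then show ?thesis by (simp add: algebra_simps)
  qed
  finally show ?thesis by (simp add: H_def Lo_def \<epsilon>_def)
qed

lemma width_step: "hi j (m+k) - lo j (m+k) \<le> (1 - \<delta>^m) * (hi j k - lo j k)"
proof -
  obtain i where i: "cl i = cl j" "mpow P (m+k) i j = hi j (m+k)" using hi_att by blast
  obtain i' where i': "cl i' = cl j" "mpow P (m+k) i' j = lo j (m+k)" using lo_att by blast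
  show ?thesis using contr_pair[OF i(1) i'(1), of k] i i' by simp
qed

lemma width_q: "hi j (q*m) - lo j (q*m) \<le> (1 - \<delta>^m)^q"
proof (induction q)
  case 0 then show ?case using hi_le1[of j 0] lo_nonneg[of j 0] by simp
next
  case (Suc q)
  have g: "0 \<le> 1 - \<delta>^m" using delta_pos delta_le1 by (simp add: power_le_one)
  have "hi j (Suc q * m) - lo j (Suc q * m) \<le> (1 - \<delta>^m) * (hi j (q*m) - lo j (q*m))"
    using width_step[of j "q*m"] by (simp add: add.commute)
  also have "\<dots> \<le> (1 - \<delta>^m) * (1 - \<delta>^m)^q" using Suc g by (intro mult_left_mono) auto
  finally show ?case by simp
qed

lemma width_k: "hi j k - lo j k \<le> (1 - \<delta>^m)^(k div m)"
proof -
  have "(k div m) * m \<le> k" by simp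
  then have "hi j k - lo j k \<le> hi j ((k div m) * m) - lo j ((k div m) * m)"
    using hi_mono lo_mono by (metis diff_mono)
  also have "\<dots> \<le> (1 - \<delta>^m)^(k div m)" by (rule width_q)
  finally show ?thesis .
qed

definition "uu j = Inf (range (hi j))"

lemma uu_bounds: "uu j \<le> hi j k" "lo j k \<le> uu j"
proof -
  have bdd: "bdd_below (range (hi j))"
    by (rule bdd_belowI[of _ 0]) (auto intro: order_trans[OF lo_nonneg lo_le_hi])
  show "uu j \<le> hi j k" unfolding uu_def by (rule cInf_lower) (use bdd in auto)
  show "lo j k \<le> uu j" unfolding uu_def
  proof (rule cInf_greatest)
    show "range (hi j) \<noteq> {}" by simp
    fix x assume "x \<in> range (hi j)"
    then obtain k' where x: "x = hi j k'" by auto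
    have "lo j k \<le> lo j (max k k')" by (rule lo_mono) simp
    also have "\<dots> \<le> hi j (max k k')" by (rule lo_le_hi)
    also have "\<dots> \<le> hi j k'" by (rule hi_mono) simp
    finally show "lo j k \<le> x" using x by simp
  qed
qed

lemma uu_conv: "cl i = cl j \<Longrightarrow> \<bar>mpow P k i j - uu j\<bar> \<le> (1 - \<delta>^m)^(k div m)"
  using hi_ge[of i j k] lo_le[of i j k] uu_bounds[of j k] width_k[of j k] by linarith

lemma uu_pos: "\<delta>^m \<le> uu j"
proof -
  obtain i where "cl i = cl j" "mpow P m i j = lo j m" using lo_att by blast
  then have "\<delta>^m \<le> lo j m" using mprop by metis
  then show ?thesis using uu_bounds(2)[of j m] by simp
qed

end

lemma ergodic_main:
  "\<exists>u c \<sigma>. (\<forall>j. 0 < u j) \<and> (\<forall>i. (\<Sum>j\<in>{j. cl j = cl i}. u j) = 1)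
     \<and> (\<forall>j. (\<Sum>l\<in>UNIV. u l * P l j) = u j) \<and> 0 \<le> \<sigma> \<and> \<sigma> < 1 \<and> 0 \<le> c
     \<and> (\<forall>k i j. \<bar>mpow P k i j - (if cl i = cl j then u j else 0)\<bar> \<le> c * \<sigma>^k)"
proof -
  obtain m where m1: "m \<ge> 1" and mprop: "\<forall>i j. cl i = cl j \<longrightarrow> \<delta>^m \<le> mpow P m i j"
    using exists_m by blast
  define \<gamma> where "\<gamma> = 1 - \<delta>^m"
  have g: "0 \<le> \<gamma>" "\<gamma> < 1" using delta_pos delta_le1 by (auto simp: \<gamma>_def power_le_one)
  obtain c \<sigma> where cs: "0 \<le> c" "0 \<le> \<sigma>" "\<sigma> < 1" "\<And>k. \<gamma>^(k div m) \<le> c * \<sigma>^k"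
    using geom_div[OF g m1] by blast
  define u where "u = uu"
  define U where "U i j = (if cl i = cl j then u j else 0)" for i j
  have conv: "\<bar>mpow P k i j - U i j\<bar> \<le> c * \<sigma>^k" for k i j
  proof (cases "cl i = cl j")
    case True
    then show ?thesis using uu_conv[OF mprop True, of k] cs(4)[of k]
      by (simp add: U_def u_def \<gamma>_def)
  next
    case False
    then show ?thesis using mpow_cross[OF False] cs by (simp add: U_def)
  qed
  have pos: "0 < u j" for j
    using uu_pos[OF mprop, of j] delta_pos by (simp add: u_def) (meson order_less_le_trans zero_less_power)
  have sum1: "(\<Sum>j\<in>{j. cl j = cl i}. u j) = 1" for i
  proof -
    have "(\<Sum>j\<in>UNIV. U i j) = (\<Sum>j\<in>{j. cl j = cl i}. u j)"
      by (subst sum.mono_neutral_right[of UNIV "{j. cl j = cl i}"]) (auto simp: U_def)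
    moreover have "\<bar>1 - (\<Sum>j\<in>UNIV. U i j)\<bar> \<le> (card (UNIV::'a set) * c) * \<sigma>^k" for k
    proof -
      have "\<bar>1 - (\<Sum>j\<in>UNIV. U i j)\<bar> = \<bar>\<Sum>j\<in>UNIV. mpow P k i j - U i j\<bar>"
        by (simp add: sum_subtractf mpow_rowsum)
      also have "\<dots> \<le> (\<Sum>j\<in>UNIV. \<bar>mpow P k i j - U i j\<bar>)" by (rule sum_abs)
      also have "\<dots> \<le> (\<Sum>j\<in>(UNIV::'a set). c * \<sigma>^k)" by (rule sum_mono) (rule conv)
      finally show ?thesis by simp
    qed
    then have "1 - (\<Sum>j\<in>UNIV. U i j) = 0" using cs by (intro zero_geom[of \<sigma>]) auto
    ultimately show ?thesis by simp
  qed
  have inv: "(\<Sum>l\<in>UNIV. u l * P l j) = u j" for j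
  proof -
    have eU: "(\<Sum>l\<in>UNIV. U j l * P l j) = (\<Sum>l\<in>UNIV. u l * P l j)"
      by (rule sum.cong) (auto simp: U_def P_cross)
    have "\<bar>u j - (\<Sum>l\<in>UNIV. u l * P l j)\<bar> \<le> (c + card (UNIV::'a set) * c) * \<sigma>^k" for k
    proof -
      have d: "u j - (\<Sum>l\<in>UNIV. u l * P l j) = (U j j - mpow P (Suc k) j j) + (\<Sum>l\<in>UNIV. (mpow P k j l - U j l) * P l j)"
        using eU mpow_Suc_right[of P k j j] by (simp del: mpow.simps(2) add: U_def left_diff_distrib sum_subtractf)
      have a1: "\<bar>U j j - mpow P (Suc k) j j\<bar> \<le> c * \<sigma>^k"
      proof -
        have "\<bar>U j j - mpow P (Suc k) j j\<bar> \<le> c * \<sigma>^(Suc k)" using conv[of "Suc k" j j] by simp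
        also have "\<dots> \<le> c * \<sigma>^k" using cs by (intro mult_left_mono power_decreasing) auto
        finally show ?thesis .
      qed
      have "\<bar>\<Sum>l\<in>UNIV. (mpow P k j l - U j l) * P l j\<bar> \<le> (\<Sum>l\<in>UNIV. \<bar>(mpow P k j l - U j l) * P l j\<bar>)"
        by (rule sum_abs)
      also have "\<dots> \<le> (\<Sum>l\<in>(UNIV::'a set). c * \<sigma>^k)"
      proof (rule sum_mono)
        fix l
        have "\<bar>(mpow P k j l - U j l) * P l j\<bar> = \<bar>mpow P k j l - U j l\<bar> * P l j"
          using P_nonneg by (simp add: abs_mult)
        also have "\<dots> \<le> (c * \<sigma>^k) * 1"
          using conv[of k j l] P_nonneg[of l j] P_le1[of l j] cs
          by (intro mult_mono) auto
        finally show "\<bar>(mpow P k j l - U j l) * P l j\<bar> \<le> c * \<sigma>^k" by simp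
      qed
      finally have a2: "\<bar>\<Sum>l\<in>UNIV. (mpow P k j l - U j l) * P l j\<bar> \<le> card (UNIV::'a set) * (c * \<sigma>^k)" by simp
      show ?thesis using d a1 a2 by (simp add: algebra_simps)
    qed
    then have "u j - (\<Sum>l\<in>UNIV. u l * P l j) = 0" using cs by (intro zero_geom[of \<sigma>]) auto
    then show ?thesis by simp
  qed
  show ?thesis
    apply (rule exI[of _ u], rule exI[of _ c], rule exI[of _ \<sigma>])
    using pos sum1 inv cs conv by (simp add: U_def)
qed

end

lemma custom_norm:
  fixes B :: "'v::real_normed_vector \<Rightarrow> 'v"
  assumes addB: "\<And>z w. B (z + w) = B z + B w" and scB: "\<And>t z. B (t *\<^sub>R z) = t *\<^sub>R B z"
    and K: "K > 0" and hK: "\<And>z. norm ((B^^K) z) \<le> norm z / 2"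
    and b: "\<And>z. norm (B z) \<le> b * norm z" and b1: "1 \<le> b"
  shows "\<exists>nr cc \<sigma>. (\<forall>z. norm z \<le> nr z) \<and> (\<forall>z. nr z \<le> cc * norm z) \<and> 0 \<le> \<sigma> \<and> \<sigma> < 1
     \<and> (\<forall>z. nr (B z) \<le> \<sigma> * nr z) \<and> (\<forall>z w. nr (z + w) \<le> nr z + nr w)
     \<and> (\<forall>z t. nr (t *\<^sub>R z) = \<bar>t\<bar> * nr z)"
proof -
  have addk: "(B^^k) (z + w) = (B^^k) z + (B^^k) w" for k z w
    by (induction k) (auto simp: addB)
  have sck: "(B^^k) (t *\<^sub>R z) = t *\<^sub>R (B^^k) z" for k t z
    by (induction k) (auto simp: scB)
  have bk: "norm ((B^^k) z) \<le> b^k * norm z" for k z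
  proof (induction k)
    case 0 then show ?case by simp
  next
    case (Suc k)
    have "norm ((B^^Suc k) z) = norm (B ((B^^k) z))" by simp
    also have "\<dots> \<le> b * norm ((B^^k) z)" by (rule b)
    also have "\<dots> \<le> b * (b^k * norm z)" using Suc b1 by (intro mult_left_mono) auto
    finally show ?case by simp
  qed
  define nr where "nr z = (\<Sum>k<K. norm ((B^^k) z))" for z
  define cc where "cc = real K * b^K"
  have cc1: "1 \<le> cc"
  proof -
    have "1 \<le> real K" using K by simp
    moreover have "1 \<le> b^K" using b1 by (rule one_le_power)
    ultimately have "1 * 1 \<le> real K * b^K" by (intro mult_mono) auto
    then show ?thesis by (simp add: cc_def)
  qed
  have low: "norm z \<le> nr z" for z
  proof -
    have "norm ((B^^0) z) \<le> nr z" unfolding nr_def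
      by (rule member_le_sum[of 0 "{..<K}" "\<lambda>k. norm ((B^^k) z)"]) (use K in auto)
    then show ?thesis by simp
  qed
  have up: "nr z \<le> cc * norm z" for z
  proof -
    have "nr z \<le> (\<Sum>k<K. b^K * norm z)" unfolding nr_def
    proof (rule sum_mono)
      fix k assume "k \<in> {..<K}"
      then have "b^k \<le> b^K" using b1 by (intro power_increasing) auto
      then show "norm ((B^^k) z) \<le> b^K * norm z"
        using bk[of k z] by (meson mult_right_mono norm_ge_zero order_trans)
    qed
    then show ?thesis by (simp add: cc_def)
  qed
  define \<sigma> where "\<sigma> = 1 - 1 / (2 * cc)"
  have s: "0 \<le> \<sigma>" "\<sigma> < 1" using cc1 by (auto simp: \<sigma>_def field_simps)
  have contr: "nr (B z) \<le> \<sigma> * nr z" for z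
  proof -
    have "nr (B z) = (\<Sum>k<K. norm ((B^^Suc k) z))" unfolding nr_def
      by (simp add: funpow_Suc_right del: funpow.simps)
    also have "\<dots> = nr z - norm z + norm ((B^^K) z)"
    proof -
      have "(\<Sum>k<Suc K. norm ((B^^k) z)) = norm ((B^^0) z) + (\<Sum>k<K. norm ((B^^Suc k) z))"
        by (rule sum.lessThan_Suc_shift)
      moreover have "(\<Sum>k<Suc K. norm ((B^^k) z)) = nr z + norm ((B^^K) z)"
        by (simp add: nr_def)
      ultimately show ?thesis by simp
    qed
    also have "\<dots> \<le> nr z - norm z / 2" using hK[of z] by simp
    also have "\<dots> \<le> nr z - nr z / (2 * cc)"
    proof -
      have "nr z / (2 * cc) \<le> (cc * norm z) / (2 * cc)"
        using up[of z] cc1 by (intro divide_right_mono) auto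
      also have "\<dots> = norm z / 2" using cc1 by simp
      finally show ?thesis by simp
    qed
    also have "\<dots> = \<sigma> * nr z" by (simp add: \<sigma>_def algebra_simps)
    finally show ?thesis .
  qed
  have tri: "nr (z + w) \<le> nr z + nr w" for z w
    unfolding nr_def sum.distrib[symmetric] by (rule sum_mono) (simp add: addk norm_triangle_ineq)
  have hom: "nr (t *\<^sub>R z) = \<bar>t\<bar> * nr z" for z t
    unfolding nr_def by (simp add: sck sum_distrib_left)
  show ?thesis using low up s contr tri hom by blast
qed


lemma game_map_sum:
  fixes cl :: "'a::finite \<Rightarrow> 'h"
  shows "game_map blk cl grad x = (\<Sum>a\<in>UNIV. pgrad blk cl grad a x)"
proof -
  have "(\<Sum>a\<in>UNIV. pgrad blk cl grad a x) $ j = game_map blk cl grad x $ j" for j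
  proof -
    have "(\<Sum>a\<in>UNIV. pgrad blk cl grad a x) $ j = (\<Sum>a\<in>UNIV. if cl a = blk j then grad a x $ j else 0)"
      by (auto simp: pgrad_def intro: sum.cong)
    also have "\<dots> = (\<Sum>a\<in>{a\<in>UNIV. cl a = blk j}. grad a x $ j)"
      by (rule sum.inter_filter[symmetric]) simp
    finally show ?thesis by (simp add: game_map_def)
  qed
  then show ?thesis by (simp add: vec_eq_iff)
qed

lemma pgrad_cluster_sum:
  fixes cl :: "'a::finite \<Rightarrow> 'h"
  shows "(\<Sum>a\<in>{a. cl a = h}. pgrad blk cl grad a x) $ j = (if blk j = h then game_map blk cl grad x $ j else 0)"
  by (auto simp: pgrad_def game_map_def intro: sum.cong)

lemma cluster_grad_comp:
  fixes cl :: "'a::finite \<Rightarrow> 'h"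
  assumes "blk j = h"
  shows "(\<Sum>a\<in>{a. cl a = h}. grad a x) $ j = game_map blk cl grad x $ j"
  using assms by (simp add: game_map_def)

lemma inner_block:
  fixes cl :: "'a::finite \<Rightarrow> 'h" and d :: "real^'q::finite"
  assumes "\<And>j. blk j \<noteq> h \<Longrightarrow> d $ j = 0"
  shows "d \<bullet> (\<Sum>a\<in>{a. cl a = h}. grad a x) = d \<bullet> game_map blk cl grad x"
  unfolding inner_vec_def
  apply (rule sum.cong, simp)
  subgoal for i by (cases "blk i = h") (auto simp: game_map_def assms)
  done

lemma line_deriv:
  fixes f :: "'a \<Rightarrow> real^'q::finite \<Rightarrow> real"
  assumes g: "\<And>a x. GDERIV (f a) x :> grad a x"
  shows "((\<lambda>t. \<Sum>a\<in>A. f a (x + t *\<^sub>R d)) has_field_derivative (d \<bullet> (\<Sum>a\<in>A. grad a (x + s *\<^sub>R d)))) (at s)"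
proof -
  have each: "((\<lambda>t. f a (x + t *\<^sub>R d)) has_derivative (\<lambda>h. (h *\<^sub>R d) \<bullet> grad a (x + s *\<^sub>R d))) (at s)" for a
  proof -
    have l: "((\<lambda>t. x + t *\<^sub>R d) has_derivative (\<lambda>h. h *\<^sub>R d)) (at s)"
      by (auto intro!: derivative_eq_intros)
    have "(f a has_derivative (\<lambda>h. h \<bullet> grad a (x + s *\<^sub>R d))) (at (x + s *\<^sub>R d))"
      using g[of a "x + s *\<^sub>R d"] by (simp add: gderiv_def)
    from has_derivative_compose[OF l this] show ?thesis .
  qed
  have "((\<lambda>t. \<Sum>a\<in>A. f a (x + t *\<^sub>R d)) has_derivative (\<lambda>h. \<Sum>a\<in>A. (h *\<^sub>R d) \<bullet> grad a (x + s *\<^sub>R d))) (at s)"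
    by (rule has_derivative_sum) (rule each)
  moreover have "(\<lambda>h. \<Sum>a\<in>A. (h *\<^sub>R d) \<bullet> grad a (x + s *\<^sub>R d)) = (*) (d \<bullet> (\<Sum>a\<in>A. grad a (x + s *\<^sub>R d)))"
    by (rule ext) (simp add: inner_sum_right sum_distrib_left mult.commute)
  ultimately show ?thesis by (simp add: has_field_derivative_def)
qed

lemma line_convex:
  fixes f :: "'a \<Rightarrow> real^'q::finite \<Rightarrow> real"
  assumes c: "\<And>a. convex_on UNIV (f a)"
  shows "convex_on UNIV (\<lambda>t::real. \<Sum>a\<in>A. f a (x + t *\<^sub>R d))"
proof (rule convex_onI)
  fix t u v :: real assume t: "0 < t" "t < 1"
  have e: "x + ((1 - t) *\<^sub>R u + t *\<^sub>R v) *\<^sub>R d = (1 - t) *\<^sub>R (x + u *\<^sub>R d) + t *\<^sub>R (x + v *\<^sub>R d)"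
    by (simp add: algebra_simps)
  have "(\<Sum>a\<in>A. f a (x + ((1 - t) *\<^sub>R u + t *\<^sub>R v) *\<^sub>R d)) \<le> (\<Sum>a\<in>A. (1 - t) * f a (x + u *\<^sub>R d) + t * f a (x + v *\<^sub>R d))"
    unfolding e by (rule sum_mono) (rule convex_onD[OF c]; use t in auto)
  also have "\<dots> = (1 - t) * (\<Sum>a\<in>A. f a (x + u *\<^sub>R d)) + t * (\<Sum>a\<in>A. f a (x + v *\<^sub>R d))"
    by (simp add: sum.distrib sum_distrib_left)
  finally show "(\<Sum>a\<in>A. f a (x + ((1 - t) *\<^sub>R u + t *\<^sub>R v) *\<^sub>R d)) \<le> (1 - t) * (\<Sum>a\<in>A. f a (x + u *\<^sub>R d)) + t * (\<Sum>a\<in>A. f a (x + v *\<^sub>R d))" .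
qed simp

lemma NE_iff:
  fixes cl :: "'a::finite \<Rightarrow> 'h" and blk :: "'q::finite \<Rightarrow> 'h"
    and f :: "'a \<Rightarrow> real^'q \<Rightarrow> real"
  assumes g: "\<And>a x. GDERIV (f a) x :> grad a x"
    and c: "\<And>a. convex_on UNIV (f a)"
  shows "is_NE blk cl f x \<longleftrightarrow> game_map blk cl grad x = 0"
proof
  assume ne: "is_NE blk cl f x"
  show "game_map blk cl grad x = 0"
  proof (subst vec_eq_iff, intro allI)
    fix j
    define h where "h = blk j"
    define M where "M = game_map blk cl grad x"
    define d where "d = (\<chi> i. if blk i = h then M $ i else 0)"
    have dz: "\<And>i. blk i \<noteq> h \<Longrightarrow> d $ i = 0" by (simp add: d_def)
    define \<phi> where "\<phi> = (\<lambda>t. \<Sum>a\<in>{a. cl a = h}. f a (x + t *\<^sub>R d))"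
    have upd: "upd_block blk h x (x + t *\<^sub>R d) = x + t *\<^sub>R d" for t
      by (auto simp: upd_block_def vec_eq_iff dz)
    have min: "\<phi> 0 \<le> \<phi> t" for t
    proof -
      have "\<phi> 0 = cluster_cost cl f h x" by (simp add: \<phi>_def cluster_cost_def)
      moreover have "\<phi> t = cluster_cost cl f h (upd_block blk h x (x + t *\<^sub>R d))"
        by (simp only: upd) (simp add: \<phi>_def cluster_cost_def)
      ultimately show ?thesis using ne unfolding is_NE_def by metis
    qed
    have D: "(\<phi> has_field_derivative (d \<bullet> (\<Sum>a\<in>{a. cl a = h}. grad a (x + 0 *\<^sub>R d)))) (at 0)"
      unfolding \<phi>_def by (rule line_deriv[OF g])
    have "d \<bullet> (\<Sum>a\<in>{a. cl a = h}. grad a (x + 0 *\<^sub>R d)) = 0"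
      by (rule DERIV_local_min[OF D, of 1]) (use min in auto)
    then have "d \<bullet> M = 0" using inner_block[where cl=cl and grad=grad and x=x, OF dz] by (simp add: M_def)
    moreover have "d \<bullet> M = d \<bullet> d"
      unfolding inner_vec_def by (rule sum.cong) (auto simp: d_def)
    ultimately have "d = 0" by simp
    then have "d $ j = 0" by simp
    then show "game_map blk cl grad x $ j = 0 $ j" by (simp add: d_def h_def M_def)
  qed
next
  assume M0: "game_map blk cl grad x = 0"
  show "is_NE blk cl f x" unfolding is_NE_def
  proof (intro allI)
    fix h z
    define y where "y = upd_block blk h x z"
    define d where "d = y - x"
    have dz: "\<And>i. blk i \<noteq> h \<Longrightarrow> d $ i = 0" by (simp add: d_def y_def upd_block_def)
    define \<phi> where "\<phi> = (\<lambda>t. \<Sum>a\<in>{a. cl a = h}. f a (x + t *\<^sub>R d))"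
    have D: "(\<phi> has_field_derivative (d \<bullet> (\<Sum>a\<in>{a. cl a = h}. grad a (x + 0 *\<^sub>R d)))) (at 0 within UNIV)"
      unfolding \<phi>_def by (rule line_deriv[OF g])
    have D0: "d \<bullet> (\<Sum>a\<in>{a. cl a = h}. grad a (x + 0 *\<^sub>R d)) = 0"
      using inner_block[where cl=cl and grad=grad and x=x, OF dz] M0 by simp
    have "\<phi> 1 - \<phi> 0 \<ge> (d \<bullet> (\<Sum>a\<in>{a. cl a = h}. grad a (x + 0 *\<^sub>R d))) * (1 - 0)"
      by (rule convex_on_imp_above_tangent[OF _ _ _ _ D]) (auto simp: \<phi>_def intro: line_convex c)
    then have "\<phi> 0 \<le> \<phi> 1" using D0 by simp
    then show "cluster_cost cl f h x \<le> cluster_cost cl f h (upd_block blk h x z)"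
      by (simp add: \<phi>_def cluster_cost_def d_def y_def)
  qed
qed


definition act :: "('a::finite \<Rightarrow> 'a \<Rightarrow> real) \<Rightarrow> ('b::real_normed_vector)^'a \<Rightarrow> 'b^'a" where
  "act M z = (\<chi> a. \<Sum>b\<in>UNIV. M a b *\<^sub>R z$b)"

lemma act_nth: "act M z $ a = (\<Sum>b\<in>UNIV. M a b *\<^sub>R z$b)"
  by (simp add: act_def)

lemma act_add: "act M (z + w) = act M z + act M w"
  by (simp add: act_def vec_eq_iff scaleR_add_right sum.distrib)
lemma act_scale: "act M (t *\<^sub>R z) = t *\<^sub>R act M z"
  by (simp add: act_def vec_eq_iff scaleR_sum_right mult.commute)
lemma act_diff: "act M (z - w) = act M z - act M w"
  by (simp add: act_def vec_eq_iff scaleR_diff_right sum_subtractf)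
lemma act_minus_mat: "act (\<lambda>a b. M a b - N a b) z = act M z - act N z"
  by (simp add: act_def vec_eq_iff scaleR_diff_left sum_subtractf)

lemma act_act: "act M (act N z) = act (\<lambda>a c. \<Sum>b\<in>UNIV. M a b * N b c) z"
proof -
  have "(act M (act N z))$a = (act (\<lambda>a c. \<Sum>b\<in>UNIV. M a b * N b c) z)$a" for a
  proof -
    have "(act M (act N z))$a = (\<Sum>b\<in>UNIV. M a b *\<^sub>R (\<Sum>c\<in>UNIV. N b c *\<^sub>R z$c))" by (simp add: act_def)
    also have "\<dots> = (\<Sum>b\<in>UNIV. \<Sum>c\<in>UNIV. (M a b * N b c) *\<^sub>R z$c)" by (simp add: scaleR_sum_right)
    also have "\<dots> = (\<Sum>c\<in>UNIV. \<Sum>b\<in>UNIV. (M a b * N b c) *\<^sub>R z$c)" by (rule sum.swap)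
    also have "\<dots> = (\<Sum>c\<in>UNIV. (\<Sum>b\<in>UNIV. M a b * N b c) *\<^sub>R z$c)" by (simp add: scaleR_sum_left)
    finally show ?thesis by (simp add: act_def)
  qed
  then show ?thesis by (simp add: vec_eq_iff)
qed

lemma act_id: "act (\<lambda>a b. if a = b then 1 else 0) z = z"
proof -
  have "(\<Sum>b\<in>UNIV. (if a = b then 1 else 0) *\<^sub>R z$b) = z$a" for a
  proof -
    have e: "(\<lambda>b. (if a = b then 1 else (0::real)) *\<^sub>R z$b) = (\<lambda>b. if a = b then z$a else 0)" by auto
    show ?thesis by (simp only: e) simp
  qed
  then show ?thesis by (simp add: act_def vec_eq_iff)
qed

lemma act_pow: "(act M ^^ k) z = act (mpow M k) z"
proof (induction k)
  case 0
  have "mpow M 0 = (\<lambda>a b. if a = b then 1 else 0)" by (simp add: fun_eq_iff)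
  then show ?case by (simp add: act_id)
next
  case (Suc k)
  have e: "mpow M (Suc k) = (\<lambda>a c. \<Sum>b\<in>UNIV. M a b * mpow M k b c)" by (simp add: fun_eq_iff)
  show ?case using Suc by (simp add: act_act e)
qed

lemma norm_vec_le_sum: "norm (z::'b::real_normed_vector^'a::finite) \<le> (\<Sum>a\<in>UNIV. norm (z$a))"
  unfolding norm_vec_def by (rule L2_set_le_sum) simp

lemma norm_act:
  fixes M :: "'a::finite \<Rightarrow> 'a \<Rightarrow> real" and z :: "'b::euclidean_space^'a"
  assumes "\<And>a b. \<bar>M a b\<bar> \<le> m"
  shows "norm (act M z) \<le> real CARD('a) * (real CARD('a) * m) * norm z"
proof -
  have c: "norm ((act M z)$a) \<le> real CARD('a) * m * norm z" for a
  proof -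
    have "norm ((act M z)$a) \<le> (\<Sum>b\<in>UNIV. norm (M a b *\<^sub>R z$b))" unfolding act_nth by (rule norm_sum)
    also have "\<dots> \<le> (\<Sum>b\<in>(UNIV::'a set). m * norm z)"
    proof (rule sum_mono)
      fix b
      have "0 \<le> m" using assms[of a b] by linarith
      then have "\<bar>M a b\<bar> * norm (z$b) \<le> m * norm z" using assms[of a b]
        by (intro mult_mono) (auto intro: Finite_Cartesian_Product.norm_nth_le)
      then show "norm (M a b *\<^sub>R z$b) \<le> m * norm z" by simp
    qed
    finally show ?thesis by simp
  qed
  have "norm (act M z) \<le> (\<Sum>a\<in>UNIV. norm ((act M z)$a))" by (rule norm_vec_le_sum)
  also have "\<dots> \<le> (\<Sum>a\<in>(UNIV::'a set). real CARD('a) * m * norm z)" by (rule sum_mono) (rule c)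
  finally show ?thesis by (simp add: algebra_simps)
qed

definition cnorm :: "('v::real_normed_vector \<Rightarrow> 'v) \<Rightarrow> ('v \<Rightarrow> real) \<Rightarrow> real \<Rightarrow> real \<Rightarrow> bool" where
 "cnorm B nr cc \<sigma> \<longleftrightarrow> (\<forall>z. norm z \<le> nr z) \<and> (\<forall>z. nr z \<le> cc * norm z) \<and> 0 \<le> \<sigma> \<and> \<sigma> < 1
     \<and> (\<forall>z. nr (B z) \<le> \<sigma> * nr z) \<and> (\<forall>z w. nr (z + w) \<le> nr z + nr w)
     \<and> (\<forall>z t. nr (t *\<^sub>R z) = \<bar>t\<bar> * nr z)"

lemma small_pow:
  fixes c \<sigma> :: real
  assumes "0 \<le> \<sigma>" "\<sigma> < 1" "0 < e"
  shows "\<exists>K. c * \<sigma>^Suc K \<le> e"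
proof -
  have "(\<lambda>k. c * \<sigma>^Suc k) \<longlonglongrightarrow> c * 0"
    by (intro tendsto_mult tendsto_const LIMSEQ_power_zero[THEN LIMSEQ_Suc]) (use assms in auto)
  then have "eventually (\<lambda>k. c * \<sigma>^Suc k < e) sequentially"
    using assms by (intro order_tendstoD(2)) auto
  then show ?thesis by (metis (mono_tags) eventually_sequentially order.refl less_imp_le)
qed

lemma act_cnorm:
  fixes M :: "'a::finite \<Rightarrow> 'a \<Rightarrow> real"
  assumes bound: "\<And>a b. \<bar>M a b\<bar> \<le> 1"
    and decay: "\<And>k a b. \<bar>mpow M (Suc k) a b\<bar> \<le> c * \<sigma>^Suc k"
    and s: "0 \<le> \<sigma>" "\<sigma> < 1"
  shows "\<exists>nr cc \<sigma>'. cnorm (act M :: (real^'q::finite)^'a \<Rightarrow> _) nr cc \<sigma>'"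
proof -
  define n where "n = real CARD('a)"
  have n1: "1 \<le> n" by (simp add: n_def)
  obtain K0 where K0: "n * n * c * \<sigma>^Suc K0 \<le> 1/2"
    using small_pow[OF s, of "1/2" "n*n*c"] by auto
  have hK: "norm ((act M ^^ Suc K0) z) \<le> norm z / 2" for z :: "(real^'q)^'a"
  proof -
    have "norm ((act M ^^ Suc K0) z) = norm (act (mpow M (Suc K0)) z)" by (simp only: act_pow)
    also have "\<dots> \<le> n * (n * (c * \<sigma>^Suc K0)) * norm z"
      unfolding n_def by (rule norm_act) (rule decay)
    also have "\<dots> \<le> (1/2) * norm z"
      using K0 by (intro mult_right_mono) (auto simp: algebra_simps)
    finally show ?thesis by simp
  qed
  have b: "norm (act M z) \<le> (n * n) * norm z" for z :: "(real^'q)^'a"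
    using norm_act[of M 1 z, OF bound] by (simp add: n_def)
  have b1: "1 \<le> n * n" using n1 by (metis mult_mono' mult_1_left zero_le_one)
  show ?thesis unfolding cnorm_def
    apply (rule custom_norm[of "act M" "Suc K0" "n*n"])
    apply (rule act_add)
    apply (rule act_scale)
    apply simp
    apply (rule hK)
    apply (rule b)
    apply (rule b1)
    done
qed


lemma sum_expand4:
  "(\<Sum>l\<in>A. (x l - y l) * (z l - w l)) = (\<Sum>l\<in>A. x l * z l) - (\<Sum>l\<in>A. x l * w l)
     - (\<Sum>l\<in>A. y l * z l) + (\<Sum>l\<in>A. y l * w l :: real)"
proof -
  have "(x l - y l) * (z l - w l) = x l * z l - x l * w l - y l * z l + y l * w l" for l
    by (simp add: algebra_simps)
  then show ?thesis by (simp add: sum.distrib sum_subtractf)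
qed

lemma uinv_pow:
  assumes "\<And>j. (\<Sum>l\<in>UNIV. u l * P l j) = u j"
  shows "(\<Sum>l\<in>UNIV. u l * mpow P k l c) = (u c :: real)"
proof (induction k arbitrary: c)
  case 0 then show ?case by (simp add: sum_ind_r)
next
  case (Suc k)
  have "(\<Sum>l\<in>UNIV. u l * mpow P (Suc k) l c) = (\<Sum>l\<in>UNIV. \<Sum>r\<in>UNIV. u l * mpow P k l r * P r c)"
    by (simp add: mpow_Suc_right[of P k] sum_distrib_left mult.assoc del: mpow.simps(2))
  also have "\<dots> = (\<Sum>r\<in>UNIV. \<Sum>l\<in>UNIV. u l * mpow P k l r * P r c)" by (rule sum.swap)
  also have "\<dots> = (\<Sum>r\<in>UNIV. (\<Sum>l\<in>UNIV. u l * mpow P k l r) * P r c)" by (simp add: sum_distrib_right)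
  also have "\<dots> = (\<Sum>r\<in>UNIV. u r * P r c)" using Suc by simp
  finally show ?case using assms by simp
qed

lemma R_ops:
  fixes R :: "real^'a::finite^'a"
  assumes "A2 R"
  shows "\<exists>u. (\<forall>j. 0 < u j) \<and> (\<Sum>j\<in>UNIV. u j) = 1 \<and> (\<forall>j. (\<Sum>l\<in>UNIV. u l * R$l$j) = u j)
     \<and> (\<exists>nr cc \<sigma>. cnorm (act (\<lambda>a b. R$a$b - u b) :: (real^'q::finite)^'a \<Rightarrow> _) nr cc \<sigma>)"
proof -
  define P where "P i j = R$i$j" for i j
  have bs: "blockstoch (\<lambda>_::'a. ()) P"
    using assms unfolding A2_def blockstoch_def strongly_connected_on_def P_def by auto
  obtain u c \<sigma> where u: "\<forall>j. 0 < u j" "\<forall>i. (\<Sum>j\<in>{j. () = ()}. u j) = 1"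
      "\<forall>j. (\<Sum>l\<in>UNIV. u l * P l j) = u j" "0 \<le> \<sigma>" "\<sigma> < 1" "0 \<le> c"
      "\<forall>k i j. \<bar>mpow P k i j - (if () = () then u j else 0)\<bar> \<le> c * \<sigma>^k"
    using ergodic_main[OF bs] by blast
  have su: "(\<Sum>j\<in>UNIV. u j) = 1" using u(2) by simp
  have rs: "(\<Sum>l\<in>UNIV. P a l) = 1" for a using P_rowsum[OF bs] by simp
  have u1: "u j \<le> 1" for j
    using member_le_sum[of j UNIV u] u(1) su by (simp add: less_imp_le)
  define M where "M a b = P a b - u b" for a b
  have Mpow: "mpow M (Suc k) a c = mpow P (Suc k) a c - u c" for k a c
  proof (induction k arbitrary: a)
    case 0 then show ?case by (simp add: sum_ind_r M_def)
  next
    case (Suc k)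
    have "mpow M (Suc (Suc k)) a c = (\<Sum>l\<in>UNIV. (P a l - u l) * (mpow P (Suc k) l c - u c))"
      by (simp only: mpow.simps(2)[of M "Suc k"] Suc.IH) (simp add: M_def)
    also have "\<dots> = (\<Sum>l\<in>UNIV. P a l * mpow P (Suc k) l c) - (\<Sum>l\<in>UNIV. P a l) * u c
        - (\<Sum>l\<in>UNIV. u l * mpow P (Suc k) l c) + (\<Sum>l\<in>UNIV. u l) * u c"
      by (simp only: sum_expand4 sum_distrib_right)
    also have "\<dots> = mpow P (Suc (Suc k)) a c - u c"
      using rs su uinv_pow[of u P "Suc k" c] u(3) by simp
    finally show ?case .
  qed
  have bound: "\<bar>M a b\<bar> \<le> 1" for a b
    using P_nonneg[OF bs, of a b] P_le1[OF bs, of a b] u(1) u1[of b] unfolding M_def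
    by (smt (verit))
  have decay: "\<bar>mpow M (Suc k) a b\<bar> \<le> c * \<sigma>^Suc k" for k a b
  proof -
    have "\<bar>mpow P (Suc k) a b - u b\<bar> \<le> c * \<sigma>^Suc k" using u(7) by (metis (full_types))
    then show ?thesis by (simp only: Mpow)
  qed
  obtain nr cc \<sigma>' where "cnorm (act M :: (real^'q)^'a \<Rightarrow> _) nr cc \<sigma>'"
    using act_cnorm[OF bound decay u(4) u(5)] by blast
  moreover have "M = (\<lambda>a b. R$a$b - u b)" by (simp add: fun_eq_iff M_def P_def)
  ultimately show ?thesis using u(1,3) su unfolding P_def by blast
qed

lemma C_ops:
  fixes C :: "real^'a::finite^'a" and cl :: "'a \<Rightarrow> 'h"
  assumes A: "A1 cl C"
  shows "\<exists>v. (\<forall>j. 0 < v j) \<and> (\<forall>i. (\<Sum>j\<in>{j. cl j = cl i}. v j) = 1) \<and> (\<forall>j. (\<Sum>l\<in>UNIV. v l * C$j$l) = v j)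
     \<and> (\<exists>nr cc \<sigma>. cnorm (act (\<lambda>a b. C$a$b - (if cl a = cl b then v a else 0)) :: (real^'q::finite)^'a \<Rightarrow> _) nr cc \<sigma>)"
proof -
  define P where "P i j = C$j$i" for i j
  have cross: "cl i \<noteq> cl j \<Longrightarrow> C$i$j = 0" for i j using A by (auto simp: A1_def)
  have bs: "blockstoch cl P"
    unfolding blockstoch_def
  proof (intro conjI allI impI)
    fix i j
    show "cl i \<noteq> cl j \<Longrightarrow> P i j = 0" using cross[of j i] by (auto simp: P_def)
    show "0 \<le> P i j" using A by (auto simp: A1_def P_def)
    show "0 < P i i" using A by (auto simp: A1_def P_def)
    show "(\<Sum>j\<in>UNIV. P i j) = 1"
    proof -
      have "(\<Sum>j\<in>UNIV. C$j$i) = (\<Sum>j\<in>{j. cl j = cl i}. C$j$i)"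
        by (rule sum.mono_neutral_right) (auto simp: cross)
      then show ?thesis using A by (simp add: A1_def P_def)
    qed
    assume e: "cl i = cl j"
    have sc: "strongly_connected_on {a. cl a = cl i} C" using A by (simp add: A1_def)
    then have "(i, j) \<in> {(j, i). C$i$j > 0}\<^sup>*" using e unfolding strongly_connected_on_def by auto
    then have "(j, i) \<in> ({(j, i). C$i$j > 0}\<inverse>)\<^sup>*" by (rule rtrancl_converseI)
    moreover have "{(j, i). C$i$j > 0}\<inverse> = {(j,i). 0 < P i j}" by (auto simp: P_def)
    ultimately show "(j, i) \<in> {(j,i). 0 < P i j}\<^sup>*" by simp
  qed
  obtain v c \<sigma> where v: "\<forall>j. 0 < v j" "\<forall>i. (\<Sum>j\<in>{j. cl j = cl i}. v j) = 1"
      "\<forall>j. (\<Sum>l\<in>UNIV. v l * P l j) = v j" "0 \<le> \<sigma>" "\<sigma> < 1" "0 \<le> c"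
      "\<forall>k i j. \<bar>mpow P k i j - (if cl i = cl j then v j else 0)\<bar> \<le> c * \<sigma>^k"
    using ergodic_main[OF bs] by blast
  have v1: "v j \<le> 1" for j
  proof -
    have "v j \<le> (\<Sum>j'\<in>{j'. cl j' = cl j}. v j')"
      by (rule member_le_sum) (use v(1) in \<open>auto intro: less_imp_le\<close>)
    then show ?thesis using v(2) by simp
  qed
  define VV where "VV a b = (if cl a = cl b then v a else 0)" for a b
  define M where "M a b = C$a$b - VV a b" for a b
  have Cv: "(\<Sum>l\<in>UNIV. C$a$l * v l) = v a" for a using v(3) by (simp add: P_def mult.commute)
  have T2: "(\<Sum>l\<in>UNIV. C$a$l * VV l c) = VV a c" for a c
  proof -
    have "C$a$l * VV l c = (if cl a = cl c then C$a$l * v l else 0)" for l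
      using cross[of a l] by (auto simp: VV_def)
    then show ?thesis using Cv[of a] by (simp add: VV_def)
  qed
  have T3: "(\<Sum>l\<in>UNIV. VV a l * mpow P k c l) = VV a c" for a c k
  proof -
    have "VV a l * mpow P k c l = (if cl a = cl c then v a * mpow P k c l else 0)" for l
      using mpow_cross[OF bs, of c l k] by (auto simp: VV_def)
    then show ?thesis using mpow_rowsum[OF bs, of k c] by (simp add: VV_def sum_distrib_left[symmetric])
  qed
  have T4: "(\<Sum>l\<in>UNIV. VV a l * VV l c) = VV a c" for a c
  proof -
    have "VV a l * VV l c = (if cl a = cl c then (if cl l = cl a then v a * v l else 0) else 0)" for l
      by (auto simp: VV_def)
    then have "(\<Sum>l\<in>UNIV. VV a l * VV l c) = (if cl a = cl c then (\<Sum>l\<in>UNIV. if cl l = cl a then v a * v l else 0) else 0)"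
      by simp
    also have "\<dots> = (if cl a = cl c then v a * (\<Sum>l\<in>{l. cl l = cl a}. v l) else 0)"
      by (simp add: sum.inter_filter[symmetric] sum_distrib_left)
    also have "\<dots> = VV a c" using v(2) by (simp add: VV_def)
    finally show ?thesis .
  qed
  have Mpow: "mpow M (Suc k) a c = mpow P (Suc k) c a - VV a c" for k a c
  proof (induction k arbitrary: a)
    case 0 then show ?case by (simp add: sum_ind_r M_def P_def)
  next
    case (Suc k)
    have "mpow M (Suc (Suc k)) a c = (\<Sum>l\<in>UNIV. (C$a$l - VV a l) * (mpow P (Suc k) c l - VV l c))"
      by (simp only: mpow.simps(2)[of M "Suc k"] Suc.IH) (simp add: M_def)
    also have "\<dots> = (\<Sum>l\<in>UNIV. C$a$l * mpow P (Suc k) c l) - (\<Sum>l\<in>UNIV. C$a$l * VV l c)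
        - (\<Sum>l\<in>UNIV. VV a l * mpow P (Suc k) c l) + (\<Sum>l\<in>UNIV. VV a l * VV l c)"
      by (rule sum_expand4)
    also have "(\<Sum>l\<in>UNIV. C$a$l * mpow P (Suc k) c l) = mpow P (Suc (Suc k)) c a"
      by (simp only: mpow_Suc_right[of P "Suc k" c a]) (simp add: P_def mult.commute)
    finally show ?case using T2[of a c] T3[of a "Suc k" c] T4[of a c] by (simp del: mpow.simps(2))
  qed
  have bound: "\<bar>M a b\<bar> \<le> 1" for a b
    using P_nonneg[OF bs, of b a] P_le1[OF bs, of b a] v(1) v1[of a] unfolding M_def VV_def P_def
    by (smt (verit))
  have decay: "\<bar>mpow M (Suc k) a b\<bar> \<le> c * \<sigma>^Suc k" for k a b
  proof -
    have e: "VV a b = (if cl b = cl a then v a else 0)" by (auto simp: VV_def)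
    show ?thesis using v(7) by (simp only: Mpow e)
  qed
  obtain nr cc \<sigma>' where "cnorm (act M :: (real^'q)^'a \<Rightarrow> _) nr cc \<sigma>'"
    using act_cnorm[OF bound decay v(4) v(5)] by blast
  moreover have "M = (\<lambda>a b. C$a$b - (if cl a = cl b then v a else 0))" by (simp add: fun_eq_iff M_def VV_def)
  ultimately show ?thesis using v(1,2) v(3) unfolding P_def by blast
qed


lemma norm_sq_expand:
  fixes e D :: "'v::real_inner"
  shows "(norm (e - t *\<^sub>R D))\<^sup>2 = (norm e)\<^sup>2 - 2*t*(D \<bullet> e) + t\<^sup>2*(norm D)\<^sup>2"
proof -
  have "(norm (e - t *\<^sub>R D))\<^sup>2 = (e - t *\<^sub>R D) \<bullet> (e - t *\<^sub>R D)" by (simp add: power2_norm_eq_inner)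
  also have "\<dots> = e \<bullet> e - 2*t*(D \<bullet> e) + t\<^sup>2*(D \<bullet> D)"
    by (simp add: inner_diff_left inner_diff_right inner_commute power2_eq_square algebra_simps)
  also have "\<dots> = (norm e)\<^sup>2 - 2*t*(D \<bullet> e) + t\<^sup>2*(norm D)\<^sup>2" by (simp add: power2_norm_eq_inner)
  finally show ?thesis .
qed

lemma zero_exists:
  fixes M :: "real^'q::finite \<Rightarrow> real^'q"
  assumes lip: "\<And>x z. norm (M x - M z) \<le> \<Lambda> * norm (x - z)" and \<Lambda>: "0 < \<Lambda>" and mu: "0 < \<mu>"
    and smon: "\<And>x z. \<mu> * (norm (x - z))\<^sup>2 \<le> (M x - M z) \<bullet> (x - z)"
  shows "\<exists>x. M x = 0"
proof -
  define \<gamma> where "\<gamma> = \<mu> / \<Lambda>\<^sup>2"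
  have g: "0 < \<gamma>" using \<Lambda> mu by (simp add: \<gamma>_def)
  define T where "T x = x - \<gamma> *\<^sub>R M x" for x
  define q where "q = max 0 (1 - \<mu>\<^sup>2/\<Lambda>\<^sup>2)"
  have q: "0 \<le> q" "q < 1" using \<Lambda> mu by (auto simp: q_def)
  have contr: "dist (T x) (T z) \<le> sqrt q * dist x z" for x z
  proof -
    define e where "e = x - z"
    define D where "D = M x - M z"
    have TT: "T x - T z = e - \<gamma> *\<^sub>R D" by (simp add: T_def e_def D_def algebra_simps)
    have nD: "norm D \<le> \<Lambda> * norm e" using lip by (simp add: D_def e_def)
    have "(norm (T x - T z))\<^sup>2 = (norm e)\<^sup>2 - 2*\<gamma>*(D \<bullet> e) + \<gamma>\<^sup>2*(norm D)\<^sup>2"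
      unfolding TT by (rule norm_sq_expand)
    also have "\<dots> \<le> (norm e)\<^sup>2 - 2*\<gamma>*(\<mu> * (norm e)\<^sup>2) + \<gamma>\<^sup>2*(\<Lambda> * norm e)\<^sup>2"
    proof -
      have "\<mu> * (norm e)\<^sup>2 \<le> D \<bullet> e" using smon[of x z] by (simp add: D_def e_def)
      then have a: "2*\<gamma>*(\<mu> * (norm e)\<^sup>2) \<le> 2*\<gamma>*(D \<bullet> e)" using g by simp
      have "(norm D)\<^sup>2 \<le> (\<Lambda> * norm e)\<^sup>2" using nD by (intro power_mono) auto
      then have b: "\<gamma>\<^sup>2*(norm D)\<^sup>2 \<le> \<gamma>\<^sup>2*(\<Lambda> * norm e)\<^sup>2" by (intro mult_left_mono) auto
      show ?thesis using a b by linarith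
    qed
    also have "\<dots> = (1 - \<mu>\<^sup>2/\<Lambda>\<^sup>2) * (norm e)\<^sup>2"
      using \<Lambda> by (simp add: \<gamma>_def power2_eq_square field_simps)
    also have "\<dots> \<le> q * (norm e)\<^sup>2" by (intro mult_right_mono) (auto simp: q_def)
    also have "\<dots> = (sqrt q * norm e)\<^sup>2" using q by (simp add: power_mult_distrib)
    finally have "(norm (T x - T z))\<^sup>2 \<le> (sqrt q * norm e)\<^sup>2" .
    then have "norm (T x - T z) \<le> sqrt q * norm e"
      by (rule power2_le_imp_le) (use q in simp)
    then show ?thesis by (simp add: dist_norm e_def)
  qed
  obtain x where "T x = x"
    using banach_fix_type[of "sqrt q" T] q contr by auto
  then have "\<gamma> *\<^sub>R M x = 0" by (simp add: T_def)
  then show ?thesis using g by auto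
qed

lemma lyap:
  fixes \<sigma>R \<sigma>C m k1 k2 k3 k4 \<alpha>max :: real
  assumes sR: "0 \<le> \<sigma>R" "\<sigma>R < 1" and sC: "0 \<le> \<sigma>C" "\<sigma>C < 1" and m: "0 < m"
    and k: "0 \<le> k1" "0 \<le> k2" "0 \<le> k3" "0 \<le> k4" and am: "0 < \<alpha>max"
  shows "\<exists>\<alpha> p s \<rho>. 0 < \<alpha> \<and> \<alpha> \<le> \<alpha>max \<and> \<alpha> * m \<le> 1 \<and> 0 < p \<and> 0 < s \<and> 0 < \<rho> \<and> \<rho> < 1 \<and>
     (\<forall>A B C A' B' C'. 0 \<le> A \<longrightarrow> 0 \<le> B \<longrightarrow> 0 \<le> C \<longrightarrow> A' \<le> \<sigma>R*A + \<alpha>*k1*(A+B+C)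
        \<longrightarrow> B' \<le> (1 - \<alpha>*m)*B + \<alpha>*k2*(A+C) \<longrightarrow> C' \<le> \<sigma>C*C + k3*A + \<alpha>*k4*(A+B+C)
        \<longrightarrow> A' + p*B' + s*C' \<le> \<rho>*(A + p*B + s*C))"
proof -
  define s where "s = (1 - \<sigma>R) / (2 * (k3 + 1))"
  define p where "p = 2 * (k1 + s*k4 + 1) / m"
  define T where "T = k1 + p*k2 + s*k4 + 1"
  define \<alpha> where "\<alpha> = min \<alpha>max (min ((1 - \<sigma>R)/(4*T)) (min (s*(1 - \<sigma>C)/(2*T)) (1/m)))"
  define \<rho> where "\<rho> = max ((3 + \<sigma>R)/4) (max (1 - \<alpha>*m/2) ((1 + \<sigma>C)/2))"
  have s: "0 < s" using sR k by (simp add: s_def)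
  have p: "0 < p" using m k s by (simp add: p_def add_nonneg_pos)
  have T: "1 \<le> T" using k s p by (simp add: T_def)
  have a: "0 < \<alpha>" using am sR sC s T m by (simp add: \<alpha>_def)
  have a1: "\<alpha> \<le> \<alpha>max" by (simp add: \<alpha>_def)
  have aT1: "\<alpha> * T \<le> (1 - \<sigma>R)/4"
  proof -
    have "\<alpha> \<le> (1 - \<sigma>R)/(4*T)" by (simp add: \<alpha>_def)
    then show ?thesis using T by (simp add: field_simps)
  qed
  have aT2: "\<alpha> * T \<le> s*(1 - \<sigma>C)/2"
  proof -
    have "\<alpha> \<le> s*(1 - \<sigma>C)/(2*T)" by (simp add: \<alpha>_def)
    then show ?thesis using T by (simp add: field_simps)
  qed
  have am1: "\<alpha> * m \<le> 1"
  proof -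
    have "\<alpha> \<le> 1/m" by (simp add: \<alpha>_def)
    then show ?thesis using m by (simp add: field_simps)
  qed
  have sk3: "s * k3 \<le> (1 - \<sigma>R)/2"
  proof -
    have "s * k3 = (1 - \<sigma>R)/2 * (k3 / (k3 + 1))" by (simp add: s_def)
    also have "\<dots> \<le> (1 - \<sigma>R)/2 * 1" using sR k by (intro mult_left_mono) auto
    finally show ?thesis by simp
  qed
  have pm: "p * m = 2 * (k1 + s*k4 + 1)" using m by (simp add: p_def)
  define cA where "cA = \<sigma>R + \<alpha>*k1 + p*\<alpha>*k2 + s*k3 + s*\<alpha>*k4"
  define cB where "cB = \<alpha>*k1 + p*(1 - \<alpha>*m) + s*\<alpha>*k4"
  define cC where "cC = \<alpha>*k1 + p*\<alpha>*k2 + s*\<sigma>C + s*\<alpha>*k4"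
  have cA: "cA \<le> \<rho>"
  proof -
    have "cA = \<sigma>R + s*k3 + (\<alpha> * T - \<alpha>)" by (simp add: cA_def T_def algebra_simps)
    also have "\<dots> \<le> (3 + \<sigma>R)/4"
    proof -
      have "4*(\<alpha>*T) \<le> 1 - \<sigma>R" "2*(s*k3) \<le> 1 - \<sigma>R" using aT1 sk3 by auto
      then have "4*(\<sigma>R + s*k3 + (\<alpha>*T - \<alpha>)) \<le> 3 + \<sigma>R" using a by (simp add: algebra_simps)
      then show ?thesis by (simp add: field_simps)
    qed
    also have "\<dots> \<le> \<rho>" by (simp add: \<rho>_def)
    finally show ?thesis .
  qed
  have cB: "cB \<le> \<rho> * p"
  proof -
    have "cB = p + \<alpha>*(k1 + s*k4) - \<alpha>*(p*m)" by (simp add: cB_def algebra_simps)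
    also have "\<dots> = p - \<alpha>*(k1 + s*k4 + 2)" using pm by (simp add: algebra_simps)
    also have "\<dots> \<le> p - \<alpha>*(p*m)/2" using pm a by (simp add: algebra_simps)
    also have "\<dots> = (1 - \<alpha>*m/2) * p" by (simp add: algebra_simps)
    also have "\<dots> \<le> \<rho> * p" using p by (intro mult_right_mono) (auto simp: \<rho>_def)
    finally show ?thesis .
  qed
  have cC: "cC \<le> \<rho> * s"
  proof -
    have "cC = s*\<sigma>C + (\<alpha> * T - \<alpha>)" by (simp add: cC_def T_def algebra_simps)
    also have "\<dots> \<le> s * ((1 + \<sigma>C)/2)" using aT2 a by (simp add: algebra_simps)
    also have "\<dots> \<le> s * \<rho>"
    proof -
      have "(1 + \<sigma>C)/2 \<le> \<rho>" unfolding \<rho>_def by (rule max.coboundedI2, rule max.cobounded2)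
      then show ?thesis using s by (intro mult_left_mono) auto
    qed
    finally show ?thesis by (simp add: mult.commute)
  qed
  have r: "0 < \<rho>"
  proof -
    have "0 < (3 + \<sigma>R)/4" using sR by simp
    also have "\<dots> \<le> \<rho>" unfolding \<rho>_def by (rule max.cobounded1)
    finally show ?thesis .
  qed
  have r1: "\<rho> < 1"
  proof -
    have "(3 + \<sigma>R)/4 < 1" "1 - \<alpha>*m/2 < 1" "(1 + \<sigma>C)/2 < 1" using sR sC a m by auto
    then show ?thesis unfolding \<rho>_def by simp
  qed
  have main: "A' + p*B' + s*C' \<le> \<rho>*(A + p*B + s*C)"
    if h: "0 \<le> A" "0 \<le> B" "0 \<le> C" "A' \<le> \<sigma>R*A + \<alpha>*k1*(A+B+C)"
      "B' \<le> (1 - \<alpha>*m)*B + \<alpha>*k2*(A+C)" "C' \<le> \<sigma>C*C + k3*A + \<alpha>*k4*(A+B+C)" for A B C A' B' C'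
  proof -
    have "p*B' \<le> p*((1 - \<alpha>*m)*B + \<alpha>*k2*(A+C))" using h p by (intro mult_left_mono) auto
    moreover have "s*C' \<le> s*(\<sigma>C*C + k3*A + \<alpha>*k4*(A+B+C))" using h s by (intro mult_left_mono) auto
    ultimately have "A' + p*B' + s*C' \<le> (\<sigma>R*A + \<alpha>*k1*(A+B+C)) + p*((1 - \<alpha>*m)*B + \<alpha>*k2*(A+C))
        + s*(\<sigma>C*C + k3*A + \<alpha>*k4*(A+B+C))" using h by linarith
    also have "\<dots> = cA*A + cB*B + cC*C" by (simp add: cA_def cB_def cC_def algebra_simps)
    also have "\<dots> \<le> \<rho> * A + \<rho> * p * B + \<rho> * s * C"
      using cA cB cC h by (intro add_mono mult_right_mono) auto
    also have "\<dots> = \<rho>*(A + p*B + s*C)" by (simp add: algebra_simps)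
    finally show ?thesis .
  qed
  show ?thesis
    apply (rule exI[of _ \<alpha>], rule exI[of _ p], rule exI[of _ s], rule exI[of _ \<rho>])
    using a a1 am1 p s r r1 main by blast
qed


locale setting =
  fixes cl :: "'a::finite \<Rightarrow> 'h" and blk :: "'q::finite \<Rightarrow> 'h" and grad :: "'a \<Rightarrow> real^'q \<Rightarrow> real^'q"
    and R C :: "real^'a^'a" and L \<mu> :: real and xs :: "real^'q"
    and u v :: "'a \<Rightarrow> real" and nR nC :: "(real^'q)^'a \<Rightarrow> real" and cR cC \<sigma>R \<sigma>C :: real
  assumes R_row: "\<And>a. (\<Sum>b\<in>UNIV. R$a$b) = 1" and R_nonneg: "\<And>a b. 0 \<le> R$a$b"
    and C_cross: "\<And>a b. cl a \<noteq> cl b \<Longrightarrow> C$a$b = 0" and C_nonneg: "\<And>a b. 0 \<le> C$a$b"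
    and C_col: "\<And>b. (\<Sum>a\<in>{a. cl a = cl b}. C$a$b) = 1"
    and u_pos: "\<And>j. 0 < u j" and u_sum: "(\<Sum>j\<in>UNIV. u j) = 1"
    and u_inv: "\<And>j. (\<Sum>l\<in>UNIV. u l * R$l$j) = u j"
    and v_pos: "\<And>j. 0 < v j" and v_sum: "\<And>i. (\<Sum>j\<in>{j. cl j = cl i}. v j) = 1"
    and v_inv: "\<And>j. (\<Sum>l\<in>UNIV. v l * C$j$l) = v j"
    and nR: "cnorm (act (\<lambda>a b. R$a$b - u b)) nR cR \<sigma>R"
    and nC: "cnorm (act (\<lambda>a b. C$a$b - (if cl a = cl b then v a else 0))) nC cC \<sigma>C"
    and L: "0 < L" and lip: "\<And>a x z. norm (pgrad blk cl grad a x - pgrad blk cl grad a z) \<le> L * norm (x - z)"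
    and mu: "0 < \<mu>"
    and smon: "\<And>x z. \<mu> * (norm (x - z))\<^sup>2 \<le> (game_map blk cl grad x - game_map blk cl grad z) \<bullet> (x - z)"
    and xs0: "game_map blk cl grad xs = 0"
begin

abbreviation "p \<equiv> pgrad blk cl grad"
abbreviation "M \<equiv> game_map blk cl grad"
definition "n = real CARD('a)"
definition "appR = (act (\<lambda>a b. R$a$b) :: (real^'q)^'a \<Rightarrow> _)"
definition "appC = (act (\<lambda>a b. C$a$b) :: (real^'q)^'a \<Rightarrow> _)"
definition "one (w::real^'q) = (\<chi> a::'a. w)"
definition "avg (z::(real^'q)^'a) = (\<Sum>a\<in>UNIV. u a *\<^sub>R z$a)"
definition "csum (z::(real^'q)^'a) a = (\<Sum>b\<in>{b. cl b = cl a}. z$b)"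
definition "Vp z = (\<chi> a. v a *\<^sub>R csum z a)"
definition "Pg (z::(real^'q)^'a) = (\<chi> a. p a (z$a))"
definition "BR = (act (\<lambda>a b. R$a$b - u b) :: (real^'q)^'a \<Rightarrow> _)"
definition "BC = (act (\<lambda>a b. C$a$b - (if cl a = cl b then v a else 0)) :: (real^'q)^'a \<Rightarrow> _)"

lemma n1: "1 \<le> n" by (simp add: n_def)

lemma R_le1: "R$a$b \<le> 1"
  using member_le_sum[of b UNIV "\<lambda>b. R$a$b"] R_row[of a] R_nonneg by simp
lemma u_le1: "u j \<le> 1"
  using member_le_sum[of j UNIV u] u_sum u_pos by (simp add: less_imp_le)
lemma v_le1: "v j \<le> 1"
proof -
  have "v j \<le> (\<Sum>j'\<in>{j'. cl j' = cl j}. v j')"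
    by (rule member_le_sum) (use v_pos in \<open>auto intro: less_imp_le\<close>)
  then show ?thesis using v_sum by simp
qed

lemma appR_one: "appR (one w) = one w"
  by (simp add: appR_def one_def act_def vec_eq_iff scaleR_sum_left[symmetric] R_row)

lemma avg_one: "avg (one w) = w"
  by (simp add: avg_def one_def scaleR_sum_left[symmetric] u_sum)

lemma avg_add: "avg (z + w) = avg z + avg w"
  by (simp add: avg_def scaleR_add_right sum.distrib)
lemma avg_diff: "avg (z - w) = avg z - avg w"
  by (simp add: avg_def scaleR_diff_right sum_subtractf)
lemma avg_scale: "avg (t *\<^sub>R z) = t *\<^sub>R avg z"
  by (simp add: avg_def scaleR_sum_right mult.commute)

lemma avg_appR: "avg (appR z) = avg z"
proof -
  have "avg (appR z) = (\<Sum>a\<in>UNIV. \<Sum>b\<in>UNIV. (u a * R$a$b) *\<^sub>R z$b)"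
    by (simp add: avg_def appR_def act_def scaleR_sum_right)
  also have "\<dots> = (\<Sum>b\<in>UNIV. \<Sum>a\<in>UNIV. (u a * R$a$b) *\<^sub>R z$b)" by (rule sum.swap)
  also have "\<dots> = (\<Sum>b\<in>UNIV. (\<Sum>a\<in>UNIV. u a * R$a$b) *\<^sub>R z$b)" by (simp add: scaleR_sum_left)
  also have "\<dots> = avg z" by (simp add: u_inv avg_def)
  finally show ?thesis .
qed

lemma BR_eq: "BR z = appR z - one (avg z)"
proof -
  have "act (\<lambda>a b. u b) z = one (avg z)" by (simp add: act_def one_def avg_def vec_eq_iff)
  then show ?thesis by (simp add: BR_def appR_def act_minus_mat)
qed

lemma BR_one: "BR (one w) = 0"
  by (simp add: BR_eq appR_one avg_one)

lemma csum_add: "csum (z + w) a = csum z a + csum w a"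
  by (simp add: csum_def sum.distrib)
lemma csum_diff: "csum (z - w) a = csum z a - csum w a"
  by (simp add: csum_def sum_subtractf)

lemma csum_appC: "csum (appC z) a = csum z a"
proof -
  have "csum (appC z) a = (\<Sum>b\<in>{b. cl b = cl a}. \<Sum>c\<in>UNIV. C$b$c *\<^sub>R z$c)"
    by (simp add: csum_def appC_def act_def)
  also have "\<dots> = (\<Sum>c\<in>UNIV. (\<Sum>b\<in>{b. cl b = cl a}. C$b$c) *\<^sub>R z$c)"
    by (subst sum.swap) (simp add: scaleR_sum_left)
  also have "\<dots> = (\<Sum>c\<in>UNIV. if cl c = cl a then z$c else 0)"
  proof (rule sum.cong)
    fix c
    show "(\<Sum>b\<in>{b. cl b = cl a}. C$b$c) *\<^sub>R z$c = (if cl c = cl a then z$c else 0)"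
    proof (cases "cl c = cl a")
      case True
      then have "{b. cl b = cl a} = {b. cl b = cl c}" by simp
      then show ?thesis using C_col[of c] True by simp
    next
      case False
      then have "(\<Sum>b\<in>{b. cl b = cl a}. C$b$c) = 0" by (intro sum.neutral) (auto intro: C_cross)
      then show ?thesis using False by simp
    qed
  qed simp
  also have "\<dots> = csum z a" by (simp add: csum_def sum.inter_filter[symmetric])
  finally show ?thesis .
qed

lemma act_VV: "act (\<lambda>a b. if cl a = cl b then v a else 0) z = Vp z"
proof -
  have "(\<Sum>b\<in>UNIV. (if cl a = cl b then v a else 0) *\<^sub>R z$b) = v a *\<^sub>R csum z a" for a
  proof -
    have "(\<Sum>b\<in>UNIV. (if cl a = cl b then v a else 0) *\<^sub>R z$b) = (\<Sum>b\<in>UNIV. if cl b = cl a then v a *\<^sub>R z$b else 0)"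
      by (rule sum.cong) auto
    also have "\<dots> = (\<Sum>b\<in>{b. cl b = cl a}. v a *\<^sub>R z$b)" by (simp add: sum.inter_filter[symmetric])
    finally show ?thesis by (simp add: csum_def scaleR_sum_right)
  qed
  then show ?thesis by (simp add: act_def Vp_def vec_eq_iff)
qed

lemma BC_eq: "BC z = appC z - Vp z"
  by (simp add: BC_def appC_def act_minus_mat act_VV)

lemma Vp_add: "Vp (z + w) = Vp z + Vp w"
  by (simp add: Vp_def csum_add vec_eq_iff scaleR_add_right)
lemma Vp_diff: "Vp (z - w) = Vp z - Vp w"
  by (simp add: Vp_def csum_diff vec_eq_iff scaleR_diff_right)

lemma Vp_appC: "Vp (appC z) = Vp z"
  by (simp add: Vp_def csum_appC)

lemma csum_cong: "cl b = cl a \<Longrightarrow> csum z b = csum z a"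
  unfolding csum_def by (simp only:)

lemma appC_Vp: "appC (Vp z) = Vp z"
proof -
  have "(\<Sum>b\<in>UNIV. C$a$b *\<^sub>R (v b *\<^sub>R csum z b)) = v a *\<^sub>R csum z a" for a
  proof -
    have "(\<Sum>b\<in>UNIV. C$a$b *\<^sub>R (v b *\<^sub>R csum z b)) = (\<Sum>b\<in>UNIV. (v b * C$a$b) *\<^sub>R csum z a)"
    proof (rule sum.cong)
      fix b
      show "C$a$b *\<^sub>R (v b *\<^sub>R csum z b) = (v b * C$a$b) *\<^sub>R csum z a"
      proof (cases "cl b = cl a")
        case True then show ?thesis using csum_cong[of b a z] by (simp add: mult.commute)
      next
        case False then show ?thesis using C_cross[of a b] by auto
      qed
    qed simp
    also have "\<dots> = v a *\<^sub>R csum z a" by (simp add: scaleR_sum_left[symmetric] v_inv)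
    finally show ?thesis .
  qed
  then show ?thesis by (simp add: appC_def act_def Vp_def vec_eq_iff)
qed

lemma Vp_Vp: "Vp (Vp z) = Vp z"
proof -
  have "csum (Vp z) a = csum z a" for a
  proof -
    have "csum (Vp z) a = (\<Sum>b\<in>{b. cl b = cl a}. v b *\<^sub>R csum z b)"
      unfolding csum_def[of "Vp z"] by (simp add: Vp_def)
    also have "\<dots> = (\<Sum>b\<in>{b. cl b = cl a}. v b *\<^sub>R csum z a)"
      by (intro sum.cong refl) (metis (mono_tags) csum_cong mem_Collect_eq)
    also have "\<dots> = csum z a" using v_sum[of a] by (simp add: scaleR_sum_left[symmetric])
    finally show ?thesis .
  qed
  then show ?thesis by (simp add: Vp_def)
qed

lemma BC_Vp: "BC (Vp z) = 0"
  by (simp add: BC_eq appC_Vp Vp_Vp)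

lemma norm_one: "norm (one w) \<le> n * norm w"
proof -
  have "norm (one w) \<le> (\<Sum>a\<in>(UNIV::'a set). norm ((one w)$a))" by (rule norm_vec_le_sum)
  then show ?thesis by (simp add: one_def n_def)
qed

lemma norm_appR: "norm (appR z) \<le> n * n * norm z"
proof -
  have "\<bar>R$a$b\<bar> \<le> 1" for a b using R_nonneg[of a b] R_le1[of a b] by simp
  then show ?thesis using norm_act[where M="\<lambda>a b. R$a$b" and m=1 and z=z]
    by (simp add: appR_def n_def)
qed

lemma norm_Vp: "norm (Vp z) \<le> n * n * norm z"
proof -
  have "\<bar>(if cl a = cl b then v a else 0)\<bar> \<le> 1" for a b using v_le1[of a] v_pos[of a] by auto
  then show ?thesis using norm_act[where M="\<lambda>a b. if cl a = cl b then v a else 0" and m=1 and z=z]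
    by (simp add: act_VV n_def)
qed

lemma Pg_lip: "norm (Pg z - Pg z') \<le> L * norm (z - z')"
proof -
  have "norm (Pg z - Pg z') \<le> norm (L *\<^sub>R (z - z'))"
  proof (rule norm_le_componentwise_cart)
    fix i
    have "norm ((Pg z - Pg z')$i) = norm (p i (z$i) - p i (z'$i))" by (simp add: Pg_def)
    also have "\<dots> \<le> L * norm (z$i - z'$i)" by (rule lip)
    also have "\<dots> = norm ((L *\<^sub>R (z - z'))$i)" using L by simp
    finally show "norm ((Pg z - Pg z')$i) \<le> norm ((L *\<^sub>R (z - z'))$i)" .
  qed
  then show ?thesis using L by simp
qed

lemma csum_Pg_xs: "csum (Pg (one xs)) a = 0"
proof -
  have "csum (Pg (one xs)) a = (\<Sum>b\<in>{b. cl b = cl a}. p b xs)" by (simp add: csum_def Pg_def one_def)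
  also have "\<dots> = 0"
  proof -
    have "(\<Sum>b\<in>{b. cl b = cl a}. p b xs) $ j = 0" for j
      using pgrad_cluster_sum[where cl=cl and h="cl a" and blk=blk and grad=grad and x=xs and j=j] xs0 by simp
    then show ?thesis by (simp add: vec_eq_iff)
  qed
  finally show ?thesis .
qed

lemma Vp_Pg_xs: "Vp (Pg (one xs)) = 0"
  unfolding Vp_def csum_Pg_xs by (simp add: vec_eq_iff)

end

context setting begin

definition "X \<alpha> x0 k = (\<chi> a. fst (iter blk cl grad R C \<alpha> x0 k) a)"
definition "Y \<alpha> x0 k = (\<chi> a. snd (iter blk cl grad R C \<alpha> x0 k) a)"

lemma X_Suc: "X \<alpha> x0 (Suc k) = appR (X \<alpha> x0 k - \<alpha> *\<^sub>R Y \<alpha> x0 k)"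
  by (simp add: X_def Y_def appR_def act_def Let_def vec_eq_iff)

lemma Y_Suc: "Y \<alpha> x0 (Suc k) = appC (Y \<alpha> x0 k) + Pg (X \<alpha> x0 (Suc k)) - Pg (X \<alpha> x0 k)"
  by (simp add: X_def Y_def appC_def Pg_def act_def Let_def vec_eq_iff)

lemma Y_0: "Y \<alpha> x0 0 = Pg (X \<alpha> x0 0)"
  by (simp add: X_def Y_def Pg_def)

lemma inv_csum: "csum (Y \<alpha> x0 k) a = csum (Pg (X \<alpha> x0 k)) a"
proof (induction k arbitrary: a)
  case 0 then show ?case by (simp add: Y_0)
next
  case (Suc k)
  show ?case unfolding Y_Suc by (simp add: csum_add csum_diff csum_appC Suc)
qed

lemma Vp_Y: "Vp (Y \<alpha> x0 k) = Vp (Pg (X \<alpha> x0 k))"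
  by (simp add: Vp_def inv_csum)

definition "w h = (\<Sum>a\<in>{a. cl a = h}. u a * v a)"
definition "wq j = w (blk j)"
definition "wmin = Min (range wq)"
definition "sc (e::real^'q) = (\<chi> j. e$j / sqrt (wq j))"
definition "\<nu> = 1 / sqrt wmin"
definition "Gw x = (\<Sum>b\<in>UNIV. w (cl b) *\<^sub>R p b x)"

lemma blk_inh: "\<exists>a. cl a = blk j"
proof (rule ccontr)
  assume "\<not> (\<exists>a. cl a = blk j)"
  then have e: "{a. cl a = blk j} = {}" by auto
  define e1 where "e1 = (axis j (1::real) :: real^'q)"
  have "M x $ j = 0" for x by (simp add: game_map_def e)
  then have "(M e1 - M 0) \<bullet> (e1 - 0) = 0" by (simp add: e1_def inner_axis)
  moreover have "\<mu> * (norm (e1 - 0))\<^sup>2 \<le> (M e1 - M 0) \<bullet> (e1 - 0)" by (rule smon)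
  ultimately show False using mu by (simp add: e1_def)
qed

lemma w_le1: "w h \<le> 1"
proof -
  have "w h \<le> (\<Sum>a\<in>{a. cl a = h}. u a)"
    unfolding w_def by (rule sum_mono) (use u_pos v_le1 in \<open>auto intro: mult_left_le less_imp_le\<close>)
  also have "\<dots> \<le> (\<Sum>a\<in>UNIV. u a)" by (rule sum_mono2) (auto intro: less_imp_le u_pos)
  finally show ?thesis using u_sum by simp
qed

lemma wq_pos: "0 < wq j"
proof -
  obtain a where a: "cl a = blk j" using blk_inh by blast
  have "u a * v a \<le> w (blk j)" unfolding w_def
    by (rule member_le_sum) (use a u_pos v_pos in \<open>auto intro: less_imp_le\<close>)
  moreover have "0 < u a * v a" using u_pos v_pos by simp
  ultimately show ?thesis by (simp add: wq_def)
qed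

lemma wq_le1: "wq j \<le> 1" by (simp add: wq_def w_le1)

lemma wmin_pos: "0 < wmin"
  unfolding wmin_def using wq_pos by (subst Min_gr_iff) auto
lemma wmin_le: "wmin \<le> wq j"
  unfolding wmin_def by (rule Min_le) auto

lemma nu_pos: "0 < \<nu>" using wmin_pos by (simp add: \<nu>_def)

lemma sc_diff: "sc (e - f) = sc e - sc f" by (simp add: sc_def vec_eq_iff diff_divide_distrib)
lemma sc_scale: "sc (t *\<^sub>R e) = t *\<^sub>R sc e" by (simp add: sc_def vec_eq_iff)

lemma norm_le_sc: "norm e \<le> norm (sc e)"
proof (rule norm_le_componentwise_cart)
  fix j
  have s: "0 < sqrt (wq j)" "sqrt (wq j) \<le> 1" using wq_pos[of j] wq_le1[of j] by auto
  have "\<bar>e$j\<bar> * sqrt (wq j) \<le> \<bar>e$j\<bar>" using s by (simp add: mult_left_le)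
  then have "\<bar>e$j\<bar> \<le> \<bar>e$j\<bar> / sqrt (wq j)" using s by (simp add: field_simps)
  then show "norm (e$j) \<le> norm (sc e $ j)" using s by (simp add: sc_def abs_divide)
qed

lemma norm_sc_le: "norm (sc e) \<le> \<nu> * norm e"
proof -
  have "norm (sc e) \<le> norm (\<nu> *\<^sub>R e)"
  proof (rule norm_le_componentwise_cart)
    fix j
    have s: "0 < sqrt wmin" "sqrt wmin \<le> sqrt (wq j)" using wmin_pos wmin_le[of j] by auto
    have "\<bar>e$j\<bar> / sqrt (wq j) \<le> \<bar>e$j\<bar> / sqrt wmin"
      using s by (intro divide_left_mono) auto
    then show "norm (sc e $ j) \<le> norm ((\<nu> *\<^sub>R e) $ j)"
      using s by (simp add: sc_def abs_divide \<nu>_def)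
  qed
  then show ?thesis using nu_pos by simp
qed

lemma Gw_comp: "Gw x $ j = wq j * M x $ j"
proof -
  have "Gw x $ j = (\<Sum>b\<in>UNIV. if cl b = blk j then wq j * grad b x $ j else 0)"
    unfolding Gw_def by (simp add: pgrad_def wq_def) (rule sum.cong, auto simp: wq_def)
  also have "\<dots> = (\<Sum>b\<in>{b. cl b = blk j}. wq j * grad b x $ j)" by (simp add: sum.inter_filter[symmetric])
  also have "\<dots> = wq j * M x $ j" by (simp add: game_map_def sum_distrib_left)
  finally show ?thesis .
qed

lemma Gw_xs: "Gw xs = 0"
  using xs0 by (simp add: vec_eq_iff Gw_comp)

lemma sc_inner: "sc (Gw x - Gw z) \<bullet> sc e = (M x - M z) \<bullet> e"
  unfolding inner_vec_def
proof (rule sum.cong)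
  fix j
  have s: "0 < sqrt (wq j)" using wq_pos[of j] by auto
  have ss: "sqrt (wq j) * sqrt (wq j) = wq j" by (metis abs_of_pos real_sqrt_mult_self wq_pos)
  have w0: "wq j \<noteq> 0" using wq_pos[of j] by simp
  have "sc (Gw x - Gw z) $ j \<bullet> sc e $ j = (wq j * (M x - M z) $ j / sqrt (wq j)) * (e $ j / sqrt (wq j))"
    by (simp add: sc_def Gw_comp right_diff_distrib)
  also have "\<dots> = (wq j * ((M x - M z) $ j * e $ j)) / (sqrt (wq j) * sqrt (wq j))"
    by (simp only: times_divide_times_eq mult.assoc)
  also have "\<dots> = (M x - M z) $ j * e $ j" by (simp only: ss) (simp add: w0)
  finally show "sc (Gw x - Gw z) $ j \<bullet> sc e $ j = (M x - M z) $ j \<bullet> e $ j" by simp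
qed simp

lemma norm_scG: "norm (sc (Gw x - Gw z)) \<le> norm (M x - M z)"
proof (rule norm_le_componentwise_cart)
  fix j
  have s: "0 < sqrt (wq j)" "sqrt (wq j) \<le> 1" using wq_pos[of j] wq_le1[of j] by auto
  have ss: "sqrt (wq j) * sqrt (wq j) = wq j" by (metis abs_of_pos real_sqrt_mult_self wq_pos)
  have "sc (Gw x - Gw z) $ j = (wq j / sqrt (wq j)) * (M x - M z) $ j"
    by (simp add: sc_def Gw_comp right_diff_distrib diff_divide_distrib)
  also have "\<dots> = sqrt (wq j) * (M x - M z) $ j" using s wq_pos[of j] by (simp add: real_div_sqrt)
  finally have "sc (Gw x - Gw z) $ j = sqrt (wq j) * (M x - M z) $ j" .
  then show "norm (sc (Gw x - Gw z) $ j) \<le> norm ((M x - M z) $ j)"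
    using s by (simp add: abs_mult) (rule mult_left_le_one_le, auto)
qed

lemma M_lip: "norm (M x - M z) \<le> n * L * norm (x - z)"
proof -
  have "norm (M x - M z) = norm (\<Sum>a\<in>UNIV. p a x - p a z)"
    by (simp add: game_map_sum sum_subtractf)
  also have "\<dots> \<le> (\<Sum>a\<in>UNIV. norm (p a x - p a z))" by (rule norm_sum)
  also have "\<dots> \<le> (\<Sum>a\<in>(UNIV::'a set). L * norm (x - z))" by (rule sum_mono) (rule lip)
  finally show ?thesis by (simp add: n_def)
qed

definition "mm = \<mu> * wmin / 2"

lemma mm_pos: "0 < mm" using mu wmin_pos by (simp add: mm_def)

lemma Gstep:
  assumes a0: "0 \<le> \<alpha>" and a1: "\<alpha> * (n*L)\<^sup>2 \<le> \<mu>" and a2: "\<alpha> * mm \<le> 1"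
  shows "norm (sc (x - xs) - \<alpha> *\<^sub>R sc (Gw x - Gw xs)) \<le> (1 - \<alpha> * mm) * norm (sc (x - xs))"
proof -
  define e where "e = x - xs"
  define S where "S = norm (sc e)"
  define D where "D = sc (Gw x - Gw xs)"
  have De: "\<mu> * (norm e)\<^sup>2 \<le> D \<bullet> sc e"
    using smon[of x xs] sc_inner[of x xs e] by (simp add: D_def e_def)
  have nD: "(norm D)\<^sup>2 \<le> (n * L)\<^sup>2 * (norm e)\<^sup>2"
  proof -
    have "norm D \<le> n * L * norm e" using norm_scG[of x xs] M_lip[of x xs] by (simp add: D_def e_def)
    then have "(norm D)\<^sup>2 \<le> (n * L * norm e)\<^sup>2" by (intro power_mono) auto
    then show ?thesis by (simp add: power_mult_distrib)
  qed
  have Se: "wmin * S\<^sup>2 \<le> (norm e)\<^sup>2"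
  proof -
    have "S \<le> \<nu> * norm e" using norm_sc_le by (simp add: S_def)
    then have "S\<^sup>2 \<le> (\<nu> * norm e)\<^sup>2" by (intro power_mono) (auto simp: S_def)
    also have "\<dots> = (norm e)\<^sup>2 / wmin" using wmin_pos by (simp add: \<nu>_def power_mult_distrib power_divide)
    finally show ?thesis using wmin_pos by (simp add: field_simps)
  qed
  have "(norm (sc e - \<alpha> *\<^sub>R D))\<^sup>2 = S\<^sup>2 - 2*\<alpha>*(D \<bullet> sc e) + \<alpha>\<^sup>2*(norm D)\<^sup>2"
    unfolding S_def by (rule norm_sq_expand)
  also have "\<dots> \<le> S\<^sup>2 - 2*\<alpha>*(\<mu> * (norm e)\<^sup>2) + \<alpha>\<^sup>2*((n * L)\<^sup>2 * (norm e)\<^sup>2)"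
  proof -
    have "2*\<alpha>*(\<mu> * (norm e)\<^sup>2) \<le> 2*\<alpha>*(D \<bullet> sc e)" using De a0 by (intro mult_left_mono) auto
    moreover have "\<alpha>\<^sup>2*(norm D)\<^sup>2 \<le> \<alpha>\<^sup>2*((n * L)\<^sup>2 * (norm e)\<^sup>2)" using nD by (intro mult_left_mono) auto
    ultimately show ?thesis by linarith
  qed
  also have "\<dots> \<le> S\<^sup>2 - \<alpha>*(\<mu> * (norm e)\<^sup>2)"
  proof -
    have "\<alpha>\<^sup>2*((n * L)\<^sup>2 * (norm e)\<^sup>2) = \<alpha> * (\<alpha> * (n*L)\<^sup>2) * (norm e)\<^sup>2" by (simp add: power2_eq_square)
    also have "\<dots> \<le> \<alpha> * \<mu> * (norm e)\<^sup>2" using a0 a1 by (intro mult_right_mono mult_left_mono) auto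
    finally show ?thesis by (simp add: algebra_simps)
  qed
  also have "\<dots> \<le> S\<^sup>2 - \<alpha>*(\<mu> * (wmin * S\<^sup>2))"
  proof -
    have "\<alpha>*(\<mu> * (wmin * S\<^sup>2)) \<le> \<alpha>*(\<mu> * (norm e)\<^sup>2)" using Se a0 mu by (intro mult_left_mono) auto
    then show ?thesis by linarith
  qed
  also have "\<dots> \<le> ((1 - \<alpha> * mm) * S)\<^sup>2"
  proof -
    have "S\<^sup>2 - \<alpha>*(\<mu> * (wmin * S\<^sup>2)) = S\<^sup>2 - 2 * (\<alpha> * mm) * S\<^sup>2" by (simp add: mm_def algebra_simps)
    also have "\<dots> \<le> S\<^sup>2 - 2 * (\<alpha> * mm) * S\<^sup>2 + (\<alpha> * mm)\<^sup>2 * S\<^sup>2" by simp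
    also have "\<dots> = ((1 - \<alpha> * mm) * S)\<^sup>2" by (simp add: power2_eq_square algebra_simps)
    finally show ?thesis .
  qed
  finally have "(norm (sc e - \<alpha> *\<^sub>R D))\<^sup>2 \<le> ((1 - \<alpha> * mm) * S)\<^sup>2" .
  then have "norm (sc e - \<alpha> *\<^sub>R D) \<le> (1 - \<alpha> * mm) * S"
    by (rule power2_le_imp_le) (use a2 in \<open>simp add: S_def\<close>)
  then show ?thesis by (simp add: S_def D_def e_def)
qed

end

context setting begin

definition "E1 \<alpha> x0 k = X \<alpha> x0 k - one (avg (X \<alpha> x0 k))"
definition "E3 \<alpha> x0 k = Y \<alpha> x0 k - Vp (Y \<alpha> x0 k)"

lemma nR_ge: "norm z \<le> nR z" using nR by (auto simp: cnorm_def)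
lemma nR_le: "nR z \<le> cR * norm z" using nR by (auto simp: cnorm_def)
lemma sR: "0 \<le> \<sigma>R" "\<sigma>R < 1" using nR by (auto simp: cnorm_def)
lemma nR_B: "nR (BR z) \<le> \<sigma>R * nR z" using nR by (auto simp: cnorm_def BR_def)
lemma nR_tri: "nR (z + z') \<le> nR z + nR z'" using nR by (auto simp: cnorm_def)
lemma nR_sc: "nR (t *\<^sub>R z) = \<bar>t\<bar> * nR z" using nR by (auto simp: cnorm_def)
lemma nR_diff: "nR (z - z') \<le> nR z + nR z'"
  using nR_tri[of z "(-1) *\<^sub>R z'"] nR_sc[of "-1" z'] by simp
lemma nR_nonneg: "0 \<le> nR z" using nR_ge[of z] norm_ge_zero order_trans by blast

lemma nC_ge: "norm z \<le> nC z" using nC by (auto simp: cnorm_def)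
lemma nC_le: "nC z \<le> cC * norm z" using nC by (auto simp: cnorm_def)
lemma sC: "0 \<le> \<sigma>C" "\<sigma>C < 1" using nC by (auto simp: cnorm_def)
lemma nC_B: "nC (BC z) \<le> \<sigma>C * nC z" using nC by (auto simp: cnorm_def BC_def)
lemma nC_tri: "nC (z + z') \<le> nC z + nC z'" using nC by (auto simp: cnorm_def)
lemma nC_nonneg: "0 \<le> nC z" using nC_ge[of z] norm_ge_zero order_trans by blast

definition "z0 = (\<chi> a::'a. (axis undefined (1::real) :: real^'q))"
lemma z0_pos: "0 < norm z0"
proof -
  have "z0 \<noteq> 0" by (simp add: z0_def vec_eq_iff axis_def)
  then show ?thesis by simp
qed
lemma cR1: "1 \<le> cR"
proof -
  have "norm z0 \<le> cR * norm z0" using nR_ge[of z0] nR_le[of z0] by linarith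
  then show ?thesis using z0_pos by simp
qed
lemma cC1: "1 \<le> cC"
proof -
  have "norm z0 \<le> cC * norm z0" using nC_ge[of z0] nC_le[of z0] by linarith
  then show ?thesis using z0_pos by simp
qed

lemma BR_add: "BR (z + z') = BR z + BR z'" by (simp add: BR_def act_add)
lemma BR_diff: "BR (z - z') = BR z - BR z'" by (simp add: BR_def act_diff)
lemma BC_add: "BC (z + z') = BC z + BC z'" by (simp add: BC_def act_add)
lemma appR_add: "appR (z + z') = appR z + appR z'" by (simp add: appR_def act_add)
lemma appR_diff: "appR (z - z') = appR z - appR z'" by (simp add: appR_def act_diff)
lemma appR_scale: "appR (t *\<^sub>R z) = t *\<^sub>R appR z" by (simp add: appR_def act_scale)
lemma one_diff: "one (x - y) = one x - one y" by (simp add: one_def vec_eq_iff)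
lemma one_add: "one (x + y) = one x + one y" by (simp add: one_def vec_eq_iff)

lemma norm_avg: "norm (avg z) \<le> n * norm z"
proof -
  have "norm (avg z) \<le> (\<Sum>a\<in>UNIV. norm (u a *\<^sub>R z$a))" unfolding avg_def by (rule norm_sum)
  also have "\<dots> \<le> (\<Sum>a\<in>(UNIV::'a set). norm z)"
  proof (rule sum_mono)
    fix a
    have "norm (u a *\<^sub>R z$a) = u a * norm (z$a)" using u_pos[of a] by simp
    also have "\<dots> \<le> 1 * norm z" using u_le1[of a] u_pos[of a]
      by (intro mult_mono) (auto intro: Finite_Cartesian_Product.norm_nth_le)
    finally show "norm (u a *\<^sub>R z$a) \<le> norm z" by simp
  qed
  finally show ?thesis by (simp add: n_def)
qed

lemma w_nonneg: "0 \<le> w h"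
  unfolding w_def by (rule sum_nonneg) (use u_pos v_pos in \<open>auto intro: less_imp_le\<close>)

lemma sum_if_univ: fixes f :: "'a \<Rightarrow> 'z::comm_monoid_add" shows "(\<Sum>b\<in>UNIV. if P b then f b else 0) = (\<Sum>b\<in>{b. P b}. f b)"
  by (simp add: sum.inter_filter[symmetric])

lemma avg_Vp: "avg (Vp z) = (\<Sum>b\<in>UNIV. w (cl b) *\<^sub>R z$b)"
proof -
  have "avg (Vp z) = (\<Sum>a\<in>UNIV. \<Sum>b\<in>UNIV. if cl b = cl a then (u a * v a) *\<^sub>R z$b else 0)"
  proof (unfold avg_def Vp_def, rule sum.cong)
    fix a
    have "u a *\<^sub>R (v a *\<^sub>R csum z a) = (\<Sum>b\<in>{b. cl b = cl a}. (u a * v a) *\<^sub>R z$b)"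
      by (simp add: csum_def scaleR_sum_right)
    also have "\<dots> = (\<Sum>b\<in>UNIV. if cl b = cl a then (u a * v a) *\<^sub>R z$b else 0)"
      by (rule sum_if_univ[symmetric])
    finally show "u a *\<^sub>R (\<chi> a. v a *\<^sub>R csum z a) $ a = (\<Sum>b\<in>UNIV. if cl b = cl a then (u a * v a) *\<^sub>R z$b else 0)"
      by simp
  qed simp
  also have "\<dots> = (\<Sum>b\<in>UNIV. \<Sum>a\<in>UNIV. if cl b = cl a then (u a * v a) *\<^sub>R z$b else 0)" by (rule sum.swap)
  also have "\<dots> = (\<Sum>b\<in>UNIV. w (cl b) *\<^sub>R z$b)"
  proof (rule sum.cong)
    fix b
    have "(\<Sum>a\<in>UNIV. if cl b = cl a then (u a * v a) *\<^sub>R z$b else 0) = (\<Sum>a\<in>UNIV. (if cl a = cl b then u a * v a else 0) *\<^sub>R z$b)"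
      by (rule sum.cong) auto
    also have "\<dots> = (\<Sum>a\<in>UNIV. if cl a = cl b then u a * v a else 0) *\<^sub>R z$b" by (simp add: scaleR_sum_left)
    also have "\<dots> = w (cl b) *\<^sub>R z$b" by (simp add: sum_if_univ w_def)
    finally show "(\<Sum>a\<in>UNIV. if cl b = cl a then (u a * v a) *\<^sub>R z$b else 0) = w (cl b) *\<^sub>R z$b" .
  qed simp
  finally show ?thesis .
qed


lemma E1_nth: "E1 \<alpha> x0 k $ b = X \<alpha> x0 k $ b - avg (X \<alpha> x0 k)"
  by (simp add: E1_def one_def)

lemma Ybd:
  "norm (Y \<alpha> x0 k) \<le> nC (E3 \<alpha> x0 k) + n*n*L*(nR (E1 \<alpha> x0 k) + n*norm (sc (avg (X \<alpha> x0 k) - xs)))"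
proof -
  define Xk where "Xk = X \<alpha> x0 k"
  define Yk where "Yk = Y \<alpha> x0 k"
  define xb where "xb = avg Xk"
  define e1 where "e1 = E1 \<alpha> x0 k"
  define e3 where "e3 = E3 \<alpha> x0 k"
  have Yd: "Yk = e3 + Vp (Pg Xk - Pg (one xs))"
    by (simp add: Yk_def e3_def E3_def Vp_diff Vp_Pg_xs Vp_Y Xk_def)
  have Xd: "Xk - one xs = e1 + one (xb - xs)"
    by (simp add: e1_def E1_def Xk_def xb_def one_diff)
  have "norm Yk \<le> norm e3 + norm (Vp (Pg Xk - Pg (one xs)))" unfolding Yd by (rule norm_triangle_ineq)
  also have "\<dots> \<le> nC e3 + n*n*norm (Pg Xk - Pg (one xs))"
    using nC_ge[of e3] norm_Vp[of "Pg Xk - Pg (one xs)"] by linarith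
  also have "\<dots> \<le> nC e3 + n*n*(L*norm (Xk - one xs))"
    using Pg_lip[of Xk "one xs"] n1 by (simp add: mult_left_mono)
  also have "\<dots> \<le> nC e3 + n*n*(L*(nR e1 + n*norm (sc (xb - xs))))"
  proof -
    have "norm (Xk - one xs) \<le> norm e1 + norm (one (xb - xs))" unfolding Xd by (rule norm_triangle_ineq)
    also have "\<dots> \<le> nR e1 + n * norm (sc (xb - xs))"
    proof -
      have "norm (one (xb - xs)) \<le> n * norm (xb - xs)" by (rule norm_one)
      also have "\<dots> \<le> n * norm (sc (xb - xs))" using n1 norm_le_sc[of "xb - xs"] by (intro mult_left_mono) auto
      finally show ?thesis using nR_ge[of e1] by linarith
    qed
    finally have "norm (Xk - one xs) \<le> nR e1 + n * norm (sc (xb - xs))" .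
    then show ?thesis using n1 L by (simp add: mult_left_mono)
  qed
  finally show ?thesis by (simp add: Yk_def e3_def e1_def xb_def Xk_def algebra_simps)
qed

lemma Arec:
  assumes a0: "0 \<le> \<alpha>"
  shows "nR (E1 \<alpha> x0 (Suc k)) \<le> \<sigma>R * nR (E1 \<alpha> x0 k) + \<alpha> * cR * norm (Y \<alpha> x0 k)"
proof -
  define Xk where "Xk = X \<alpha> x0 k"
  define Yk where "Yk = Y \<alpha> x0 k"
  define e1 where "e1 = E1 \<alpha> x0 k"
  define Z where "Z = Xk - \<alpha> *\<^sub>R Yk"
  have "E1 \<alpha> x0 (Suc k) = BR Z"
    by (simp add: E1_def X_Suc BR_eq avg_appR Z_def Xk_def Yk_def)
  also have "Z = (e1 - \<alpha> *\<^sub>R Yk) + one (avg Xk)"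
    by (simp add: Z_def e1_def E1_def Xk_def)
  finally have e: "E1 \<alpha> x0 (Suc k) = BR (e1 - \<alpha> *\<^sub>R Yk)"
    by (simp add: BR_add BR_one)
  have "nR (E1 \<alpha> x0 (Suc k)) \<le> \<sigma>R * nR (e1 - \<alpha> *\<^sub>R Yk)" unfolding e by (rule nR_B)
  also have "\<dots> \<le> \<sigma>R * (nR e1 + \<alpha> * nR Yk)"
    using nR_diff[of e1 "\<alpha> *\<^sub>R Yk"] nR_sc[of \<alpha> Yk] a0 sR by (intro mult_left_mono) auto
  also have "\<dots> = \<sigma>R * nR e1 + \<sigma>R * (\<alpha> * nR Yk)" by (simp add: algebra_simps)
  also have "\<dots> \<le> \<sigma>R * nR e1 + \<alpha> * cR * norm Yk"
  proof -
    have "\<sigma>R * (\<alpha> * nR Yk) \<le> 1 * (\<alpha> * nR Yk)"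
      using sR a0 nR_nonneg[of Yk] by (intro mult_right_mono) auto
    also have "\<dots> \<le> \<alpha> * (cR * norm Yk)" using a0 nR_le[of Yk] by (simp add: mult_left_mono)
    finally show ?thesis by (simp add: algebra_simps)
  qed
  finally show ?thesis by (simp add: e1_def Yk_def)
qed

lemma Brec:
  assumes a0: "0 \<le> \<alpha>" and a1: "\<alpha> * (n*L)\<^sup>2 \<le> \<mu>" and a2: "\<alpha> * mm \<le> 1"
  shows "norm (sc (avg (X \<alpha> x0 (Suc k)) - xs)) \<le> (1 - \<alpha>*mm) * norm (sc (avg (X \<alpha> x0 k) - xs))
           + \<alpha> * \<nu> * (n * nC (E3 \<alpha> x0 k) + n * L * nR (E1 \<alpha> x0 k))"
proof -
  define Xk where "Xk = X \<alpha> x0 k"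
  define Yk where "Yk = Y \<alpha> x0 k"
  define xb where "xb = avg Xk"
  define e1 where "e1 = E1 \<alpha> x0 k"
  define e3 where "e3 = E3 \<alpha> x0 k"
  define R1 where "R1 = (\<Sum>b\<in>UNIV. w (cl b) *\<^sub>R (p b (Xk$b) - p b xb))"
  have aY: "avg Yk = avg e3 + (Gw xb + R1)"
  proof -
    have "Yk = e3 + Vp (Pg Xk)" by (simp add: e3_def E3_def Yk_def Xk_def Vp_Y)
    then have "avg Yk = avg e3 + avg (Vp (Pg Xk))" by (simp add: avg_add)
    also have "avg (Vp (Pg Xk)) = (\<Sum>b\<in>UNIV. w (cl b) *\<^sub>R p b (Xk$b))" by (simp add: avg_Vp Pg_def)
    also have "\<dots> = Gw xb + R1"
      by (simp add: Gw_def R1_def scaleR_diff_right sum_subtractf)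
    finally show ?thesis .
  qed
  have "avg (X \<alpha> x0 (Suc k)) = xb - \<alpha> *\<^sub>R avg Yk"
    by (simp add: X_Suc avg_appR avg_diff avg_scale xb_def Xk_def Yk_def)
  then have d: "avg (X \<alpha> x0 (Suc k)) - xs = ((xb - xs) - \<alpha> *\<^sub>R (Gw xb - Gw xs)) - \<alpha> *\<^sub>R avg e3 - \<alpha> *\<^sub>R R1"
    by (simp add: aY Gw_xs algebra_simps)
  have sd: "sc (avg (X \<alpha> x0 (Suc k)) - xs) = (sc (xb - xs) - \<alpha> *\<^sub>R sc (Gw xb - Gw xs)) - \<alpha> *\<^sub>R sc (avg e3) - \<alpha> *\<^sub>R sc R1"
    unfolding d by (simp only: sc_diff sc_scale)
  have "norm (sc (avg (X \<alpha> x0 (Suc k)) - xs)) \<le> norm (sc (xb - xs) - \<alpha> *\<^sub>R sc (Gw xb - Gw xs)) + norm (\<alpha> *\<^sub>R sc (avg e3)) + norm (\<alpha> *\<^sub>R sc R1)"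
    unfolding sd using norm_triangle_ineq4[of "sc (xb - xs) - \<alpha> *\<^sub>R sc (Gw xb - Gw xs) - \<alpha> *\<^sub>R sc (avg e3)" "\<alpha> *\<^sub>R sc R1"]
      norm_triangle_ineq4[of "sc (xb - xs) - \<alpha> *\<^sub>R sc (Gw xb - Gw xs)" "\<alpha> *\<^sub>R sc (avg e3)"] by linarith
  also have "\<dots> \<le> (1 - \<alpha>*mm) * norm (sc (xb - xs)) + \<alpha> * (\<nu> * (n * nC e3)) + \<alpha> * (\<nu> * (n * L * nR e1))"
  proof -
    have g: "norm (sc (xb - xs) - \<alpha> *\<^sub>R sc (Gw xb - Gw xs)) \<le> (1 - \<alpha>*mm) * norm (sc (xb - xs))"
      by (rule Gstep[OF a0 a1 a2])
    have h1: "norm (sc (avg e3)) \<le> \<nu> * (n * nC e3)"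
    proof -
      have "norm (sc (avg e3)) \<le> \<nu> * norm (avg e3)" by (rule norm_sc_le)
      also have "\<dots> \<le> \<nu> * (n * nC e3)"
        using norm_avg[of e3] nC_ge[of e3] n1 nu_pos
        by (intro mult_left_mono) (auto intro: order_trans mult_left_mono)
      finally show ?thesis .
    qed
    have h2: "norm (sc R1) \<le> \<nu> * (n * L * nR e1)"
    proof -
      have "norm R1 \<le> (\<Sum>b\<in>UNIV. norm (w (cl b) *\<^sub>R (p b (Xk$b) - p b xb)))"
        unfolding R1_def by (rule norm_sum)
      also have "\<dots> \<le> (\<Sum>b\<in>(UNIV::'a set). L * nR e1)"
      proof (rule sum_mono)
        fix b
        have "norm (w (cl b) *\<^sub>R (p b (Xk$b) - p b xb)) = w (cl b) * norm (p b (Xk$b) - p b xb)"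
          using w_nonneg by simp
        also have "\<dots> \<le> 1 * norm (p b (Xk$b) - p b xb)"
          using w_le1 by (intro mult_right_mono) auto
        also have "\<dots> \<le> L * norm (Xk$b - xb)" using lip by simp
        also have "\<dots> = L * norm (e1 $ b)" by (simp add: e1_def E1_nth Xk_def xb_def)
        also have "\<dots> \<le> L * nR e1"
          using L Finite_Cartesian_Product.norm_nth_le[of e1 b] nR_ge[of e1] by (intro mult_left_mono) auto
        finally show "norm (w (cl b) *\<^sub>R (p b (Xk$b) - p b xb)) \<le> L * nR e1" .
      qed
      finally have "norm R1 \<le> n * L * nR e1" by (simp add: n_def)
      then have "\<nu> * norm R1 \<le> \<nu> * (n * L * nR e1)" using nu_pos by (intro mult_left_mono) auto
      then show ?thesis using norm_sc_le[of R1] by linarith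
    qed
    have "norm (\<alpha> *\<^sub>R sc (avg e3)) \<le> \<alpha> * (\<nu> * (n * nC e3))" using h1 a0 by (simp add: mult_left_mono)
    moreover have "norm (\<alpha> *\<^sub>R sc R1) \<le> \<alpha> * (\<nu> * (n * L * nR e1))" using h2 a0 by (simp add: mult_left_mono)
    ultimately show ?thesis using g by linarith
  qed
  finally show ?thesis by (simp add: xb_def Xk_def e1_def e3_def algebra_simps)
qed

lemma Crec:
  assumes a0: "0 \<le> \<alpha>"
  shows "nC (E3 \<alpha> x0 (Suc k)) \<le> \<sigma>C * nC (E3 \<alpha> x0 k)
           + cC * (1 + n*n) * L * ((n*n + 1) * nR (E1 \<alpha> x0 k) + \<alpha> * (n*n) * norm (Y \<alpha> x0 k))"
proof -
  define Xk where "Xk = X \<alpha> x0 k"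
  define Yk where "Yk = Y \<alpha> x0 k"
  define X1 where "X1 = X \<alpha> x0 (Suc k)"
  define e1 where "e1 = E1 \<alpha> x0 k"
  define e3 where "e3 = E3 \<alpha> x0 k"
  define D where "D = Pg X1 - Pg Xk"
  have Y1: "Y \<alpha> x0 (Suc k) = appC Yk + D" by (simp add: Y_Suc D_def Yk_def X1_def Xk_def)
  have e3d: "E3 \<alpha> x0 (Suc k) = BC e3 + (D - Vp D)"
  proof -
    have "E3 \<alpha> x0 (Suc k) = (appC Yk - Vp Yk) + (D - Vp D)"
      by (simp add: E3_def Y1 Vp_add Vp_appC)
    also have "appC Yk - Vp Yk = BC Yk" by (simp add: BC_eq)
    also have "BC Yk = BC e3"
    proof -
      have "Yk = e3 + Vp Yk" by (simp add: e3_def E3_def Yk_def)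
      then have "BC Yk = BC e3 + BC (Vp Yk)" by (metis BC_add)
      then show ?thesis by (simp add: BC_Vp)
    qed
    finally show ?thesis .
  qed
  have nD: "norm (D - Vp D) \<le> (1 + n*n) * norm D"
  proof -
    have "norm (D - Vp D) \<le> norm D + norm (Vp D)" by (rule norm_triangle_ineq4)
    then show ?thesis using norm_Vp[of D] by (simp add: algebra_simps)
  qed
  have dX: "X1 - Xk = appR e1 - e1 - \<alpha> *\<^sub>R appR Yk"
  proof -
    have Xe: "Xk = e1 + one (avg Xk)" by (simp add: e1_def E1_def Xk_def)
    have z: "Xk - \<alpha> *\<^sub>R Yk = e1 + one (avg Xk) - \<alpha> *\<^sub>R Yk" by (simp add: e1_def E1_def Xk_def)
    have "X1 = appR (e1 + one (avg Xk) - \<alpha> *\<^sub>R Yk)" unfolding X1_def X_Suc z[symmetric] by (simp add: Xk_def Yk_def)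
    also have "\<dots> = appR e1 + one (avg Xk) - \<alpha> *\<^sub>R appR Yk" by (simp add: appR_add appR_diff appR_scale appR_one)
    finally have X1e: "X1 = appR e1 + one (avg Xk) - \<alpha> *\<^sub>R appR Yk" .
    show ?thesis by (simp only: X1e) (simp add: e1_def E1_def Xk_def algebra_simps)
  qed
  have nX: "norm (X1 - Xk) \<le> (n*n + 1) * nR e1 + \<alpha> * (n*n) * norm Yk"
  proof -
    have "norm (X1 - Xk) \<le> norm (appR e1) + norm e1 + norm (\<alpha> *\<^sub>R appR Yk)"
      unfolding dX using norm_triangle_ineq4[of "appR e1 - e1" "\<alpha> *\<^sub>R appR Yk"]
        norm_triangle_ineq4[of "appR e1" e1] by linarith
    also have "\<dots> \<le> n*n*norm e1 + norm e1 + \<alpha> * (n*n*norm Yk)"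
      using norm_appR[of e1] norm_appR[of Yk] a0 by (simp add: mult_left_mono add_mono)
    also have "\<dots> \<le> (n*n + 1) * nR e1 + \<alpha> * (n*n) * norm Yk"
    proof -
      have "(n*n + 1) * norm e1 \<le> (n*n + 1) * nR e1" using nR_ge[of e1] n1 by (intro mult_left_mono) auto
      then show ?thesis by (simp add: algebra_simps)
    qed
    finally show ?thesis .
  qed
  have "nC (E3 \<alpha> x0 (Suc k)) \<le> nC (BC e3) + nC (D - Vp D)" unfolding e3d by (rule nC_tri)
  also have "\<dots> \<le> \<sigma>C * nC e3 + cC * ((1 + n*n) * norm D)"
    using nC_B[of e3] nC_le[of "D - Vp D"] nD cC1 by (smt (verit) mult_left_mono)
  also have "\<dots> \<le> \<sigma>C * nC e3 + cC * ((1 + n*n) * (L * norm (X1 - Xk)))"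
  proof -
    have "norm D \<le> L * norm (X1 - Xk)" unfolding D_def by (rule Pg_lip)
    then have "(1 + n*n) * norm D \<le> (1 + n*n) * (L * norm (X1 - Xk))" using n1 by (intro mult_left_mono) auto
    then show ?thesis using cC1 by (simp add: mult_left_mono)
  qed
  also have "\<dots> \<le> \<sigma>C * nC e3 + cC * ((1 + n*n) * (L * ((n*n + 1) * nR e1 + \<alpha> * (n*n) * norm Yk)))"
  proof -
    have "L * norm (X1 - Xk) \<le> L * ((n*n + 1) * nR e1 + \<alpha> * (n*n) * norm Yk)" using nX L by (intro mult_left_mono) auto
    then have "(1 + n*n) * (L * norm (X1 - Xk)) \<le> (1 + n*n) * (L * ((n*n + 1) * nR e1 + \<alpha> * (n*n) * norm Yk))"
      by (rule mult_left_mono) (use n1 in auto)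
    then show ?thesis using cC1 by (simp add: mult_left_mono)
  qed
  finally show ?thesis by (simp add: e3_def e1_def Yk_def algebra_simps)
qed

end

context setting begin

lemma Xdev: "norm (X \<alpha> x0 k - one xs) \<le> nR (E1 \<alpha> x0 k) + n * norm (sc (avg (X \<alpha> x0 k) - xs))"
proof -
  define Xk where "Xk = X \<alpha> x0 k"
  define xb where "xb = avg Xk"
  define e1 where "e1 = E1 \<alpha> x0 k"
  have Xd: "Xk - one xs = e1 + one (xb - xs)"
    by (simp add: e1_def E1_def Xk_def xb_def one_diff)
  have "norm (Xk - one xs) \<le> norm e1 + norm (one (xb - xs))" unfolding Xd by (rule norm_triangle_ineq)
  also have "\<dots> \<le> nR e1 + n * norm (sc (xb - xs))"
  proof -
    have "norm (one (xb - xs)) \<le> n * norm (xb - xs)" by (rule norm_one)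
    also have "\<dots> \<le> n * norm (sc (xb - xs))" using n1 norm_le_sc[of "xb - xs"] by (intro mult_left_mono) auto
    finally show ?thesis using nR_ge[of e1] by linarith
  qed
  finally show ?thesis by (simp add: Xk_def xb_def e1_def)
qed

lemma converge:
  "\<exists>\<alpha>>0. \<forall>x0. \<exists>c>0. \<exists>\<rho>. 0 < \<rho> \<and> \<rho> < 1 \<and>
     (\<forall>a k. norm (fst (iter blk cl grad R C \<alpha> x0 k) a - xs) \<le> c * \<rho>^k)"
proof -
  define K0 where "K0 = 1 + n*n*n*L"
  define k1 where "k1 = cR * K0"
  define k2 where "k2 = \<nu> * n * (1 + L)"
  define k3 where "k3 = cC * (1 + n*n) * L * (n*n + 1)"
  define k4 where "k4 = cC * (1 + n*n) * L * (n*n) * K0"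
  define amax where "amax = \<mu> / (n*L)\<^sup>2"
  have K0: "1 \<le> K0" using n1 L by (simp add: K0_def)
  have nnL: "n*n*L \<le> K0"
  proof -
    have "n*n*L * 1 \<le> n*n*L * n" using n1 L by (intro mult_left_mono) auto
    then show ?thesis by (simp add: K0_def algebra_simps)
  qed
  have nnnL: "n*n*n*L \<le> K0" by (simp add: K0_def)
  have k1: "0 \<le> k1" using cR1 K0 by (simp add: k1_def)
  have k2: "0 \<le> k2" using nu_pos n1 L by (simp add: k2_def)
  have k3: "0 \<le> k3" using cC1 n1 L by (simp add: k3_def)
  have k4: "0 \<le> k4" using cC1 n1 L K0 by (simp add: k4_def)
  have am: "0 < amax" using mu n1 L by (simp add: amax_def)
  obtain \<alpha> p s \<rho> where ly: "0 < \<alpha>" "\<alpha> \<le> amax" "\<alpha> * mm \<le> 1" "0 < p" "0 < s" "0 < \<rho>" "\<rho> < 1"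
    "\<forall>A B C A' B' C'. 0 \<le> A \<longrightarrow> 0 \<le> B \<longrightarrow> 0 \<le> C \<longrightarrow> A' \<le> \<sigma>R*A + \<alpha>*k1*(A+B+C)
        \<longrightarrow> B' \<le> (1 - \<alpha>*mm)*B + \<alpha>*k2*(A+C) \<longrightarrow> C' \<le> \<sigma>C*C + k3*A + \<alpha>*k4*(A+B+C)
        \<longrightarrow> A' + p*B' + s*C' \<le> \<rho>*(A + p*B + s*C)"
    using lyap[OF sR(1) sR(2) sC(1) sC(2) mm_pos k1 k2 k3 k4 am] by blast
  have a1: "\<alpha> * (n*L)\<^sup>2 \<le> \<mu>"
  proof -
    have "0 < (n*L)\<^sup>2" using n1 L by simp
    then show ?thesis using ly(2) by (simp add: amax_def field_simps)
  qed
  have a0: "0 \<le> \<alpha>" using ly(1) by simp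
  have main: "\<forall>x0. \<exists>c>0. \<exists>\<rho>. 0 < \<rho> \<and> \<rho> < 1 \<and> (\<forall>a k. norm (fst (iter blk cl grad R C \<alpha> x0 k) a - xs) \<le> c * \<rho>^k)"
  proof (intro allI)
    fix x0
    define A where "A k = nR (E1 \<alpha> x0 k)" for k
    define B where "B k = norm (sc (avg (X \<alpha> x0 k) - xs))" for k
    define Cc where "Cc k = nC (E3 \<alpha> x0 k)" for k
    define V where "V k = A k + p * B k + s * Cc k" for k
    have nn: "0 \<le> A k" "0 \<le> B k" "0 \<le> Cc k" for k
      by (auto simp: A_def B_def Cc_def nR_nonneg nC_nonneg)
    have Yb: "norm (Y \<alpha> x0 k) \<le> K0 * (A k + B k + Cc k)" for k
    proof -
      have "norm (Y \<alpha> x0 k) \<le> Cc k + n*n*L*(A k + n*B k)" using Ybd[of \<alpha> x0 k] by (simp add: A_def B_def Cc_def)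
      also have "\<dots> = Cc k + (n*n*L)*A k + (n*n*n*L)*B k" by (simp add: algebra_simps)
      also have "\<dots> \<le> K0 * Cc k + K0 * A k + K0 * B k"
      proof -
        have "1 * Cc k \<le> K0 * Cc k" by (rule mult_right_mono[OF K0 nn(3)])
        moreover have "(n*n*L) * A k \<le> K0 * A k" by (rule mult_right_mono[OF nnL nn(1)])
        moreover have "(n*n*n*L) * B k \<le> K0 * B k" by (rule mult_right_mono[OF nnnL nn(2)])
        ultimately show ?thesis by linarith
      qed
      finally show ?thesis by (simp add: algebra_simps)
    qed
    have step: "V (Suc k) \<le> \<rho> * V k" for k
    proof -
      have hA: "A (Suc k) \<le> \<sigma>R * A k + \<alpha>*k1*(A k + B k + Cc k)"
      proof -
        have "A (Suc k) \<le> \<sigma>R * A k + \<alpha> * cR * norm (Y \<alpha> x0 k)" using Arec[OF a0, of x0 k] by (simp add: A_def)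
        also have "\<alpha> * cR * norm (Y \<alpha> x0 k) \<le> \<alpha> * cR * (K0 * (A k + B k + Cc k))"
          using Yb[of k] a0 cR1 by (intro mult_left_mono) auto
        finally show ?thesis by (simp add: k1_def algebra_simps)
      qed
      have hB: "B (Suc k) \<le> (1 - \<alpha>*mm) * B k + \<alpha>*k2*(A k + Cc k)"
      proof -
        have "B (Suc k) \<le> (1 - \<alpha>*mm) * B k + \<alpha> * \<nu> * (n * Cc k + n * L * A k)"
          using Brec[OF a0 a1 ly(3), of x0 k] by (simp add: A_def B_def Cc_def)
        also have "\<alpha> * \<nu> * (n * Cc k + n * L * A k) \<le> \<alpha> * \<nu> * (n * (1 + L) * (A k + Cc k))"
        proof -
          have "n * Cc k + n * L * A k \<le> n * (1 + L) * (A k + Cc k)"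
            using nn[of k] n1 L by (simp add: algebra_simps)
          then show ?thesis using a0 nu_pos by (intro mult_left_mono) auto
        qed
        finally show ?thesis by (simp add: k2_def algebra_simps)
      qed
      have hC: "Cc (Suc k) \<le> \<sigma>C * Cc k + k3 * A k + \<alpha>*k4*(A k + B k + Cc k)"
      proof -
        have "Cc (Suc k) \<le> \<sigma>C * Cc k + cC * (1 + n*n) * L * ((n*n + 1) * A k + \<alpha> * (n*n) * norm (Y \<alpha> x0 k))"
          using Crec[OF a0, of x0 k] by (simp add: A_def Cc_def)
        also have "\<dots> = \<sigma>C * Cc k + k3 * A k + (cC * (1 + n*n) * L * (n*n)) * (\<alpha> * norm (Y \<alpha> x0 k))"
          by (simp add: k3_def algebra_simps)
        also have "\<dots> \<le> \<sigma>C * Cc k + k3 * A k + (cC * (1 + n*n) * L * (n*n)) * (\<alpha> * (K0 * (A k + B k + Cc k)))"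
        proof -
          have "\<alpha> * norm (Y \<alpha> x0 k) \<le> \<alpha> * (K0 * (A k + B k + Cc k))" using Yb[of k] a0 by (intro mult_left_mono) auto
          moreover have "0 \<le> cC * (1 + n*n) * L * (n*n)" using cC1 n1 L by simp
          ultimately show ?thesis by (simp add: mult_left_mono)
        qed
        also have "\<dots> = \<sigma>C * Cc k + k3 * A k + \<alpha>*k4*(A k + B k + Cc k)" by (simp add: k4_def algebra_simps)
        finally show ?thesis .
      qed
      show ?thesis unfolding V_def using ly(8) nn[of k] hA hB hC by blast
    qed
    have Vk: "V k \<le> \<rho>^k * V 0" for k
    proof (induction k)
      case 0 then show ?case by simp
    next
      case (Suc k)
      have "V (Suc k) \<le> \<rho> * V k" by (rule step)
      also have "\<dots> \<le> \<rho> * (\<rho>^k * V 0)" using Suc ly(6) by (intro mult_left_mono) auto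
      finally show ?case by simp
    qed
    have V0: "0 \<le> V 0" using nn[of 0] ly(4,5) by (simp add: V_def)
    define c where "c = (1 + n/p) * V 0 + 1"
    have c: "0 < c" using V0 n1 ly(4) by (simp add: c_def add_nonneg_pos)
    have bound: "norm (fst (iter blk cl grad R C \<alpha> x0 k) a - xs) \<le> c * \<rho>^k" for a k
    proof -
      have "norm (fst (iter blk cl grad R C \<alpha> x0 k) a - xs) = norm ((X \<alpha> x0 k - one xs) $ a)"
        by (simp add: X_def one_def)
      also have "\<dots> \<le> norm (X \<alpha> x0 k - one xs)" by (rule Finite_Cartesian_Product.norm_nth_le)
      also have "\<dots> \<le> A k + n * B k" using Xdev by (simp add: A_def B_def)
      also have "\<dots> \<le> (1 + n/p) * V k"
      proof -
        have "A k \<le> V k" using nn[of k] ly(4,5) by (simp add: V_def)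
        moreover have "n * B k \<le> (n/p) * V k"
        proof -
          have "n * B k = (n/p) * (p * B k)" using ly(4) by simp
          also have "\<dots> \<le> (n/p) * V k" using nn[of k] n1 ly(4,5) by (intro mult_left_mono) (auto simp: V_def)
          finally show ?thesis .
        qed
        ultimately show ?thesis by (simp add: algebra_simps)
      qed
      also have "\<dots> \<le> (1 + n/p) * (\<rho>^k * V 0)" using Vk[of k] n1 ly(4) by (intro mult_left_mono) auto
      also have "\<dots> \<le> c * \<rho>^k"
      proof -
        have "(1 + n/p) * (\<rho>^k * V 0) = ((1 + n/p) * V 0) * \<rho>^k" by simp
        also have "\<dots> \<le> c * \<rho>^k" using ly(6) by (intro mult_right_mono) (auto simp: c_def)
        finally show ?thesis .
      qed
      finally show ?thesis .
    qed
    show "\<exists>c>0. \<exists>\<rho>. 0 < \<rho> \<and> \<rho> < 1 \<and> (\<forall>a k. norm (fst (iter blk cl grad R C \<alpha> x0 k) a - xs) \<le> c * \<rho>^k)"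
      using c ly(6,7) bound by blast
  qed
  show ?thesis using main ly(1) by blast
qed

end

theorem theorem1:
  fixes cl :: "'a::finite \<Rightarrow> 'h::finite"
    and blk :: "'q::finite \<Rightarrow> 'h"
    and f :: "'a \<Rightarrow> real^'q \<Rightarrow> real"
    and grad :: "'a \<Rightarrow> real^'q \<Rightarrow> real^'q"
    and C R :: "real^'a^'a"
    and L \<mu> :: real
  assumes hA1: "A1 cl C"
    and hA2: "A2 R"
    and grad: "\<And>a x. GDERIV (f a) x :> grad a x"
    and cont: "\<And>a. continuous_on UNIV (grad a)"
    and cvx: "\<And>a. convex_on UNIV (f a)"
    and L: "L > 0"
    and lip: "\<And>a x z. norm (pgrad blk cl grad a x - pgrad blk cl grad a z) \<le> L * norm (x - z)"
    and mu: "\<mu> > 0"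
    and smon: "\<And>x z. (game_map blk cl grad x - game_map blk cl grad z) \<bullet> (x - z) \<ge> \<mu> * (norm (x - z))\<^sup>2"
  shows "\<exists>xs. (\<forall>x. is_NE blk cl f x \<longleftrightarrow> x = xs)
           \<and> (\<forall>h. (\<Sum>a\<in>{a. cl a = h}. pgrad blk cl grad a xs) = 0)
           \<and> (\<exists>\<alpha>>0. \<forall>x0.
                (\<forall>a. (\<lambda>k. fst (iter blk cl grad R C \<alpha> x0 k) a) \<longlonglongrightarrow> xs)
              \<and> (\<exists>c>0. \<exists>\<rho>. 0 < \<rho> \<and> \<rho> < 1 \<and>
                   (\<forall>a k. norm (fst (iter blk cl grad R C \<alpha> x0 k) a - xs) \<le> c * \<rho> ^ k)))"
proof -
  obtain u where u: "\<forall>j. 0 < u j" "(\<Sum>j\<in>UNIV. u j) = 1" "\<forall>j. (\<Sum>l\<in>UNIV. u l * R$l$j) = u j"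
     "\<exists>nr cc \<sigma>. cnorm (act (\<lambda>a b. R$a$b - u b) :: (real^'q)^'a \<Rightarrow> _) nr cc \<sigma>"
    using R_ops[OF hA2] by blast
  obtain nR cR \<sigma>R where nR: "cnorm (act (\<lambda>a b. R$a$b - u b) :: (real^'q)^'a \<Rightarrow> _) nR cR \<sigma>R"
    using u(4) by blast
  obtain v where v: "\<forall>j. 0 < v j" "\<forall>i. (\<Sum>j\<in>{j. cl j = cl i}. v j) = 1" "\<forall>j. (\<Sum>l\<in>UNIV. v l * C$j$l) = v j"
     "\<exists>nr cc \<sigma>. cnorm (act (\<lambda>a b. C$a$b - (if cl a = cl b then v a else 0)) :: (real^'q)^'a \<Rightarrow> _) nr cc \<sigma>"
    using C_ops[OF hA1] by blast
  obtain nC cC \<sigma>C where nC: "cnorm (act (\<lambda>a b. C$a$b - (if cl a = cl b then v a else 0)) :: (real^'q)^'a \<Rightarrow> _) nC cC \<sigma>C"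
    using v(4) by blast
  have Mlip: "norm (game_map blk cl grad x - game_map blk cl grad z) \<le> (real CARD('a) * L) * norm (x - z)" for x z
  proof -
    have "norm (game_map blk cl grad x - game_map blk cl grad z) = norm (\<Sum>a\<in>UNIV. pgrad blk cl grad a x - pgrad blk cl grad a z)"
      by (simp add: game_map_sum sum_subtractf)
    also have "\<dots> \<le> (\<Sum>a\<in>UNIV. norm (pgrad blk cl grad a x - pgrad blk cl grad a z))" by (rule norm_sum)
    also have "\<dots> \<le> (\<Sum>a\<in>(UNIV::'a set). L * norm (x - z))" by (rule sum_mono) (rule lip)
    finally show ?thesis by simp
  qed
  have Lam: "0 < real CARD('a) * L" using L by simp
  obtain xs where xs0: "game_map blk cl grad xs = 0"
    using zero_exists[OF Mlip Lam mu] smon by blast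
  have st: "setting cl blk grad R C L \<mu> xs u v nR nC cR cC \<sigma>R \<sigma>C"
    unfolding setting_def using hA1 hA2 u v nR nC L lip mu smon xs0 by (auto simp: A1_def A2_def)
  interpret S: setting cl blk grad R C L \<mu> xs u v nR nC cR cC \<sigma>R \<sigma>C by (rule st)
  have ne: "is_NE blk cl f x \<longleftrightarrow> x = xs" for x
  proof -
    have "game_map blk cl grad x = 0 \<longleftrightarrow> x = xs"
    proof
      assume M0: "game_map blk cl grad x = 0"
      have "\<mu> * (norm (x - xs))\<^sup>2 \<le> 0" using smon[of x xs] M0 xs0 by simp
      then have "(norm (x - xs))\<^sup>2 \<le> 0" using mu by (simp add: mult_le_0_iff)
      then have "norm (x - xs) = 0" by simp
      then show "x = xs" by simp
    qed (use xs0 in simp)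
    then show ?thesis using NE_iff[where f=f and grad=grad and blk=blk and cl=cl and x=x, OF grad cvx] by simp
  qed
  have cs: "(\<Sum>a\<in>{a. cl a = h}. pgrad blk cl grad a xs) = 0" for h
  proof -
    have "(\<Sum>a\<in>{a. cl a = h}. pgrad blk cl grad a xs) $ j = 0" for j
      using pgrad_cluster_sum[where cl=cl and h=h and blk=blk and grad=grad and x=xs and j=j] xs0 by simp
    then show ?thesis by (simp add: vec_eq_iff)
  qed
  obtain \<alpha> where a: "0 < \<alpha>" and conv: "\<forall>x0. \<exists>c>0. \<exists>\<rho>. 0 < \<rho> \<and> \<rho> < 1 \<and>
     (\<forall>a k. norm (fst (iter blk cl grad R C \<alpha> x0 k) a - xs) \<le> c * \<rho>^k)"
    using S.converge by blast
  have lim: "(\<lambda>k. fst (iter blk cl grad R C \<alpha> x0 k) a) \<longlonglongrightarrow> xs" for x0 a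
  proof -
    obtain c \<rho> where c: "0 < c" "0 < \<rho>" "\<rho> < 1" "\<forall>a k. norm (fst (iter blk cl grad R C \<alpha> x0 k) a - xs) \<le> c * \<rho>^k"
      using conv by blast
    have g: "(\<lambda>k. c * \<rho>^k) \<longlonglongrightarrow> 0"
    proof -
      have "(\<lambda>k. c * \<rho>^k) \<longlonglongrightarrow> c * 0"
        by (intro tendsto_mult tendsto_const LIMSEQ_power_zero) (use c in auto)
      then show ?thesis by simp
    qed
    have "(\<lambda>k. fst (iter blk cl grad R C \<alpha> x0 k) a - xs) \<longlonglongrightarrow> 0"
      by (rule Lim_null_comparison[OF _ g]) (use c(4) in auto)
    then show ?thesis by (rule LIM_zero_cancel)
  qed
  show ?thesis
    apply (rule exI[of _ xs])
    using ne cs a conv lim by blast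
qed


end
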